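(* Let $G=(V,E)$ be a cycle on $2n+1$ vertices with $n\ge 1$. Then the acyclic orientations of $E$ whose induced posets have the maximum number of linear extensions (among all acyclic orientations of $E$) are exactly the almost bipartite orientations.
   Context: An acyclic orientation of $E$ induces a partial order on $V$ in which $u<v$ if and only if there is a directed path from $u$ to $v$. A linear extension of a partial order $P$ on an $m$-element set $V$ is a bijection $\sigma:V\to[m]$ such that $u<_P v$ implies $\sigma(u)<\sigma(v)$. An acyclic orientation of an odd cycle is called almost bipartite if it contains exactly one directed $2$-path, i.e. exactly one instance of directed edges $(u,v)$ and $(v,w)$ with $u,v,w\in V$. *)

theory Defs
  imports "HOL-Library.FuncSet"
begin

definition cycle_vertices :: "nat \<Rightarrow> nat set" where
  "cycle_vertices m = {0..<m}"

definition cycle_edges :: "nat \<Rightarrow> nat set set" where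
  "cycle_edges m = {{i, Suc i mod m} | i. i < m}"

definition is_orientation :: "'a set set \<Rightarrow> ('a \<times> 'a) set \<Rightarrow> bool" where
  "is_orientation E D \<longleftrightarrow>
     (\<forall>(u,v)\<in>D. {u,v} \<in> E) \<and>
     (\<forall>e\<in>E. \<exists>u v. e = {u,v} \<and> u \<noteq> v \<and>
        (((u,v) \<in> D \<and> (v,u) \<notin> D) \<or> ((v,u) \<in> D \<and> (u,v) \<notin> D)))"

definition acyclic_orientation :: "'a set set \<Rightarrow> ('a \<times> 'a) set \<Rightarrow> bool" where
  "acyclic_orientation E D \<longleftrightarrow> is_orientation E D \<and> acyclic D"

text \<open>Linear extensions of the poset induced by D on V (u < v iff directed path
  from u to v, i.e. (u,v) in the transitive closure of D): bijections
  V \<rightarrow> {1..card V} respecting the order; taken extensional so they are counted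
  as functions on V.\<close>
definition linear_extensions :: "'a set \<Rightarrow> ('a \<times> 'a) set \<Rightarrow> ('a \<Rightarrow> nat) set" where
  "linear_extensions V D =
     {\<sigma> \<in> extensional V. bij_betw \<sigma> V {1..card V} \<and>
        (\<forall>u\<in>V. \<forall>v\<in>V. (u,v) \<in> D\<^sup>+ \<longrightarrow> \<sigma> u < \<sigma> v)}"

definition num_linear_extensions :: "'a set \<Rightarrow> ('a \<times> 'a) set \<Rightarrow> nat" where
  "num_linear_extensions V D = card (linear_extensions V D)"

definition directed_2paths :: "('a \<times> 'a) set \<Rightarrow> ('a \<times> 'a \<times> 'a) set" where
  "directed_2paths D = {(u,v,w). (u,v) \<in> D \<and> (v,w) \<in> D}"

definition almost_bipartite :: "'a set set \<Rightarrow> ('a \<times> 'a) set \<Rightarrow> bool" where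
  "almost_bipartite E D \<longleftrightarrow> acyclic_orientation E D \<and> card (directed_2paths D) = 1"

end

theory Submission
  imports Defs Complex_Main
begin



definition SOP :: "'a set \<Rightarrow> ('a \<times> 'a) set \<Rightarrow> nat \<Rightarrow> ('a \<Rightarrow> nat) set" where
  "SOP V R k = {f \<in> V \<rightarrow>\<^sub>E {1..k}. \<forall>u v. (u,v) \<in> R \<longrightarrow> f u < f v}"

definition rchain :: "('a \<times> 'a) set \<Rightarrow> 'a set \<Rightarrow> bool" where
  "rchain R C \<longleftrightarrow> (\<forall>x\<in>C. \<forall>y\<in>C. x \<noteq> y \<longrightarrow> (x,y) \<in> R \<or> (y,x) \<in> R)"

definition GC :: "'a set \<Rightarrow> ('a \<times> 'a) set \<Rightarrow> nat \<Rightarrow> ('a \<Rightarrow> nat) set" where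
  "GC V R k = {g \<in> V \<rightarrow>\<^sub>E {1..k}. \<forall>C. C \<subseteq> V \<longrightarrow> rchain R C \<longrightarrow> sum g C \<le> k}"

definition Mx :: "'a set \<Rightarrow> ('a \<times> 'a) set \<Rightarrow> ('a \<Rightarrow> nat) \<Rightarrow> 'a \<Rightarrow> nat" where
  "Mx V R f v = Max (insert 0 (f ` {u\<in>V. (u,v) \<in> R}))"

lemma finite_SOP: "finite V \<Longrightarrow> finite (SOP V R k)"
  unfolding SOP_def by (rule finite_subset[of _ "V \<rightarrow>\<^sub>E {1..k}"]) (auto intro: finite_PiE)

lemma finite_GC: "finite V \<Longrightarrow> finite (GC V R k)"
  unfolding GC_def by (rule finite_subset[of _ "V \<rightarrow>\<^sub>E {1..k}"]) (auto intro: finite_PiE)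

lemma Mx_ge: "finite V \<Longrightarrow> u \<in> V \<Longrightarrow> (u,v) \<in> R \<Longrightarrow> f u \<le> Mx V R f v"
  unfolding Mx_def by (rule Max_ge) auto

lemma Mx_lt:
  assumes "finite V" "f \<in> SOP V R k" "v \<in> V"
  shows "Mx V R f v < f v"
proof -
  have fin: "finite (insert 0 (f ` {u\<in>V. (u,v) \<in> R}))" using assms(1) by auto
  have "\<forall>x \<in> insert 0 (f ` {u\<in>V. (u,v) \<in> R}). x < f v"
    using assms(2,3) unfolding SOP_def by (auto simp: PiE_iff)
  then show ?thesis unfolding Mx_def using fin by (simp)
qed

lemma chain_top_f:
  assumes "finite C" "C \<noteq> {}" "rchain R C" "f \<in> SOP V R k"
  obtains t where "t \<in> C" "\<forall>x\<in>C. x = t \<or> (x,t) \<in> R"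
proof -
  let ?M = "Max (f ` C)"
  have "?M \<in> f ` C" using assms by auto
  then obtain t where t: "t \<in> C" "f t = ?M" by auto
  have "\<forall>x\<in>C. x = t \<or> (x,t) \<in> R"
  proof
    fix x assume x: "x \<in> C"
    have "f x \<le> f t" using t x assms(1) by auto
    moreover have "(t,x) \<in> R \<longrightarrow> f t < f x" using assms(4) unfolding SOP_def by auto
    ultimately show "x = t \<or> (x,t) \<in> R" using assms(3) x t unfolding rchain_def by force
  qed
  then show ?thesis using t that by blast
qed

lemma chain_sum_le:
  assumes fin: "finite V" and f: "f \<in> SOP V R k"
  shows "finite C \<Longrightarrow> C \<subseteq> V \<Longrightarrow> rchain R C \<Longrightarrow> t \<in> C \<Longrightarrow> (\<forall>x\<in>C. x = t \<or> (x,t) \<in> R)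
     \<Longrightarrow> sum (\<lambda>v. f v - Mx V R f v) C \<le> f t"
proof (induction "card C" arbitrary: C t rule: less_induct)
  case less
  let ?g = "\<lambda>v. f v - Mx V R f v"
  define C' where "C' = C - {t}"
  have sumC: "sum ?g C = ?g t + sum ?g C'"
    unfolding C'_def using less.prems by (simp add: sum.remove)
  show ?case
  proof (cases "C' = {}")
    case True
    then show ?thesis using sumC by simp
  next
    case False
    have chC': "rchain R C'" using less.prems(3) unfolding rchain_def C'_def by auto
    obtain t' where t': "t' \<in> C'" "\<forall>x\<in>C'. x = t' \<or> (x,t') \<in> R"
      using chain_top_f[OF _ False chC' f] less.prems(1) C'_def by auto
    have "card C' < card C" unfolding C'_def using less.prems by (meson card_Diff1_less)
    then have IH: "sum ?g C' \<le> f t'"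
      using less.hyps[of C' t'] less.prems t' chC' C'_def by auto
    have "(t',t) \<in> R" using less.prems(5) t' C'_def by auto
    then have "f t' \<le> Mx V R f t" using Mx_ge[OF fin] t' less.prems C'_def by auto
    moreover have "Mx V R f t < f t" using Mx_lt[OF fin f] less.prems by auto
    ultimately show ?thesis using sumC IH by linarith
  qed
qed

lemma A1:
  assumes fin: "finite V" and wf: "wf R" and RV: "R \<subseteq> V \<times> V"
  shows "card (SOP V R k) \<le> card (GC V R k)"
proof -
  define T where "T f = restrict (\<lambda>v. f v - Mx V R f v) V" for f
  have into: "T f \<in> GC V R k" if f: "f \<in> SOP V R k" for f
  proof -
    have "T f \<in> V \<rightarrow>\<^sub>E {1..k}"
    proof -
      have "\<And>v. v \<in> V \<Longrightarrow> f v - Mx V R f v \<in> {1..k}"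
        using Mx_lt[OF fin f] f unfolding SOP_def by (force simp: PiE_iff)
      then show ?thesis unfolding T_def by auto
    qed
    moreover have "sum (T f) C \<le> k" if C: "C \<subseteq> V" "rchain R C" for C
    proof (cases "C = {}")
      case True then show ?thesis by simp
    next
      case False
      have finC: "finite C" using C fin finite_subset by auto
      obtain t where t: "t \<in> C" "\<forall>x\<in>C. x = t \<or> (x,t) \<in> R"
        using chain_top_f[OF finC False C(2) f] by auto
      have "sum (T f) C = sum (\<lambda>v. f v - Mx V R f v) C"
        unfolding T_def using C by (intro sum.cong) auto
      also have "\<dots> \<le> f t" using chain_sum_le[OF fin f finC C t] .
      also have "\<dots> \<le> k" using f t C unfolding SOP_def by (auto simp: PiE_iff)
      finally show ?thesis .
    qed
    ultimately show ?thesis unfolding GC_def by auto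
  qed
  have inj: "inj_on T (SOP V R k)"
  proof (rule inj_onI)
    fix f1 f2 assume f1: "f1 \<in> SOP V R k" and f2: "f2 \<in> SOP V R k" and eq: "T f1 = T f2"
    have "\<forall>v. v \<in> V \<longrightarrow> f1 v = f2 v"
    proof (intro allI)
      fix v show "v \<in> V \<longrightarrow> f1 v = f2 v"
      proof (induction v rule: wf_induct[OF wf])
        case (1 v)
        show ?case
        proof
          assume v: "v \<in> V"
          have "{u\<in>V. (u,v) \<in> R} = {u. (u,v) \<in> R}" using RV by auto
          have "f1 ` {u\<in>V. (u,v) \<in> R} = f2 ` {u\<in>V. (u,v) \<in> R}"
            using 1 by (intro image_cong) auto
          then have M: "Mx V R f1 v = Mx V R f2 v" unfolding Mx_def by simp
          have "f1 v - Mx V R f1 v = f2 v - Mx V R f2 v"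
            using fun_cong[OF eq, of v] v unfolding T_def by simp
          then show "f1 v = f2 v" using M Mx_lt[OF fin f1 v] Mx_lt[OF fin f2 v] by linarith
        qed
      qed
    qed
    then show "f1 = f2" using f1 f2 unfolding SOP_def by (auto simp: PiE_iff intro!: extensionalityI)
  qed
  show ?thesis by (rule card_inj_on_le[OF inj]) (use into finite_GC[OF fin] in auto)
qed




definition CH :: "'a set \<Rightarrow> ('a \<times> 'a) set \<Rightarrow> 'a \<Rightarrow> 'a set set" where
  "CH V R v = {C. C \<subseteq> V \<and> rchain R C \<and> v \<in> C \<and> (\<forall>x\<in>C. x = v \<or> (x,v) \<in> R)}"

definition FF :: "'a set \<Rightarrow> ('a \<times> 'a) set \<Rightarrow> ('a \<Rightarrow> nat) \<Rightarrow> 'a \<Rightarrow> nat" where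
  "FF V R g v = Max (sum g ` CH V R v)"

lemma finite_CH: "finite V \<Longrightarrow> finite (CH V R v)"
  unfolding CH_def by (rule finite_subset[of _ "Pow V"]) auto

lemma CH_single: "v \<in> V \<Longrightarrow> {v} \<in> CH V R v"
  unfolding CH_def rchain_def by auto

lemma FF_ge: "finite V \<Longrightarrow> C \<in> CH V R v \<Longrightarrow> sum g C \<le> FF V R g v"
  unfolding FF_def by (rule Max_ge) (auto simp: finite_CH)

lemma FF_attain: "finite V \<Longrightarrow> v \<in> V \<Longrightarrow> \<exists>C \<in> CH V R v. FF V R g v = sum g C"
proof -
  assume "finite V" "v \<in> V"
  then have "FF V R g v \<in> sum g ` CH V R v"
    unfolding FF_def by (intro Max_in) (auto simp: finite_CH dest: CH_single)
  then show ?thesis by auto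
qed

lemma chain_top:
  assumes tr: "trans R"
  shows "finite C \<Longrightarrow> C \<noteq> {} \<Longrightarrow> rchain R C \<Longrightarrow> \<exists>t\<in>C. \<forall>x\<in>C. x = t \<or> (x,t) \<in> R"
proof (induction C rule: finite_ne_induct)
  case (singleton x) then show ?case by auto
next
  case (insert x F)
  have "rchain R F" using insert.prems unfolding rchain_def by auto
  then obtain t where t: "t \<in> F" "\<forall>y\<in>F. y = t \<or> (y,t) \<in> R" using insert.IH by auto
  have "x \<noteq> t" using insert.hyps t by auto
  then have "(x,t) \<in> R \<or> (t,x) \<in> R" using insert.prems t unfolding rchain_def by auto
  then show ?case
  proof
    assume "(x,t) \<in> R" then show ?case using t by auto
  next
    assume xt: "(t,x) \<in> R"
    have "\<forall>y\<in>insert x F. y = x \<or> (y,x) \<in> R"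
      using t xt tr by (auto dest: transD)
    then show ?case by auto
  qed
qed

lemma FF_rec:
  assumes fin: "finite V" and tr: "trans R" and irr: "\<And>x. (x,x) \<notin> R" and RV: "R \<subseteq> V \<times> V"
    and v: "v \<in> V"
  shows "FF V R g v = g v + Max (insert 0 (FF V R g ` {u\<in>V. (u,v) \<in> R}))"
proof (rule antisym)
  obtain C where C: "C \<in> CH V R v" "FF V R g v = sum g C" using FF_attain[OF fin v] by auto
  have finC: "finite C" using C fin unfolding CH_def by (auto intro: finite_subset)
  define C' where "C' = C - {v}"
  have sC: "sum g C = g v + sum g C'" unfolding C'_def using C finC unfolding CH_def
    by (simp add: sum.remove)
  have finM: "finite (insert 0 (FF V R g ` {u\<in>V. (u,v) \<in> R}))" using fin by auto
  show "FF V R g v \<le> g v + Max (insert 0 (FF V R g ` {u\<in>V. (u,v) \<in> R}))"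
  proof (cases "C' = {}")
    case True then show ?thesis using C sC by simp
  next
    case False
    have chC': "rchain R C'" using C unfolding CH_def rchain_def C'_def by auto
    obtain u where u: "u \<in> C'" "\<forall>x\<in>C'. x = u \<or> (x,u) \<in> R"
      using chain_top[OF tr _ False chC'] finC C'_def by auto
    have uv: "(u,v) \<in> R" using u C unfolding CH_def C'_def by auto
    have uV: "u \<in> V" using uv RV by auto
    have "C' \<in> CH V R u" using u chC' C unfolding CH_def C'_def by auto
    then have "sum g C' \<le> FF V R g u" using FF_ge[OF fin] by auto
    also have "\<dots> \<le> Max (insert 0 (FF V R g ` {u\<in>V. (u,v) \<in> R}))"
      using uv uV finM by (intro Max_ge) auto
    finally show ?thesis using C sC by simp
  qed
next
  have finM: "finite (insert 0 (FF V R g ` {u\<in>V. (u,v) \<in> R}))" using fin by auto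
  have "\<forall>y \<in> insert 0 (FF V R g ` {u\<in>V. (u,v) \<in> R}). g v + y \<le> FF V R g v"
  proof
    fix y assume "y \<in> insert 0 (FF V R g ` {u\<in>V. (u,v) \<in> R})"
    then consider "y = 0" | u where "u \<in> V" "(u,v) \<in> R" "y = FF V R g u" by auto
    then show "g v + y \<le> FF V R g v"
    proof cases
      case 1 then show ?thesis using FF_ge[OF fin CH_single[OF v], of g] by simp
    next
      case 2
      obtain C where C: "C \<in> CH V R u" "FF V R g u = sum g C" using FF_attain[OF fin 2(1)] by auto
      have finC: "finite C" using C fin unfolding CH_def by (auto intro: finite_subset)
      have vC: "v \<notin> C"
      proof
        assume "v \<in> C"
        then have "v = u \<or> (v,u) \<in> R" using C unfolding CH_def by auto
        then show False using 2 irr tr by (auto dest: transD)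
      qed
      have "insert v C \<in> CH V R v"
        using C 2 v tr unfolding CH_def rchain_def by (auto dest: transD)
      then have "sum g (insert v C) \<le> FF V R g v" using FF_ge[OF fin] by blast
      then show ?thesis using 2 C vC finC by simp
    qed
  qed
  then show "g v + Max (insert 0 (FF V R g ` {u\<in>V. (u,v) \<in> R})) \<le> FF V R g v"
    using finM by (metis (no_types, lifting) Max_in empty_not_insert)
qed

lemma A2:
  assumes fin: "finite V" and tr: "trans R" and irr: "\<And>x. (x,x) \<notin> R" and RV: "R \<subseteq> V \<times> V"
  shows "card (GC V R k) \<le> card (SOP V R k)"
proof -
  define T where "T g = restrict (FF V R g) V" for g
  have into: "T g \<in> SOP V R k" if g: "g \<in> GC V R k" for g
  proof -
    have "FF V R g v \<in> {1..k}" if v: "v \<in> V" for v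
    proof -
      have "g v \<ge> 1" using g v unfolding GC_def by (auto simp: PiE_iff)
      then have "1 \<le> FF V R g v" using FF_ge[OF fin CH_single[OF v, of R], of g] by simp
      moreover obtain C where C: "C \<in> CH V R v" "FF V R g v = sum g C" using FF_attain[OF fin v] by auto
      then have "sum g C \<le> k" using g unfolding GC_def CH_def by auto
      ultimately show ?thesis using C by auto
    qed
    moreover have "FF V R g u < FF V R g v" if uv: "(u,v) \<in> R" for u v
    proof -
      have V: "u \<in> V" "v \<in> V" using uv RV by auto
      have "g v \<ge> 1" using g V unfolding GC_def by (auto simp: PiE_iff)
      moreover have "FF V R g u \<le> Max (insert 0 (FF V R g ` {u\<in>V. (u,v) \<in> R}))"
        using fin V uv by (intro Max_ge) auto
      ultimately show ?thesis using FF_rec[OF fin tr irr RV V(2), of g] by linarith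
    qed
    moreover have "\<And>u v. (u,v) \<in> R \<Longrightarrow> u \<in> V \<and> v \<in> V" using RV by auto
    ultimately show ?thesis unfolding SOP_def T_def by auto
  qed
  have inj: "inj_on T (GC V R k)"
  proof (rule inj_onI)
    fix g1 g2 assume g1: "g1 \<in> GC V R k" and g2: "g2 \<in> GC V R k" and eq: "T g1 = T g2"
    have "g1 v = g2 v" if v: "v \<in> V" for v
    proof -
      have e: "FF V R g1 u = FF V R g2 u" if "u \<in> V" for u
        using fun_cong[OF eq, of u] that unfolding T_def by simp
      have "FF V R g1 ` {u\<in>V. (u,v) \<in> R} = FF V R g2 ` {u\<in>V. (u,v) \<in> R}"
        using e by (intro image_cong) auto
      then show ?thesis using FF_rec[OF fin tr irr RV v, of g1] FF_rec[OF fin tr irr RV v, of g2] e[OF v]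
        by simp
    qed
    then show "g1 = g2" using g1 g2 unfolding GC_def by (auto simp: PiE_iff intro!: extensionalityI)
  qed
  show ?thesis by (rule card_inj_on_le[OF inj]) (use into finite_SOP[OF fin] in auto)
qed

lemma A3:
  assumes "\<And>x y. (x,y) \<in> R' \<Longrightarrow> (x,y) \<in> R \<or> (y,x) \<in> R"
  shows "GC V R k \<subseteq> GC V R' k"
proof -
  have "rchain R C" if "rchain R' C" for C using that assms unfolding rchain_def by blast
  then show ?thesis unfolding GC_def by auto
qed




definition LEr :: "'a set \<Rightarrow> ('a \<times> 'a) set \<Rightarrow> ('a \<Rightarrow> nat) set" where
  "LEr V R = {\<sigma> \<in> extensional V. bij_betw \<sigma> V {1..card V} \<and>
        (\<forall>u\<in>V. \<forall>v\<in>V. (u,v) \<in> R \<longrightarrow> \<sigma> u < \<sigma> v)}"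

lemma finite_LEr: "finite V \<Longrightarrow> finite (LEr V R)"
proof -
  assume fin: "finite V"
  have "LEr V R \<subseteq> V \<rightarrow>\<^sub>E {1..card V}"
    unfolding LEr_def by (auto simp: PiE_iff bij_betw_def extensional_def)
  then show ?thesis using fin by (meson finite_PiE finite_atLeastAtMost finite_subset)
qed

lemma A4:
  assumes fin: "finite V" and RV: "R \<subseteq> V \<times> V"
  shows "card (LEr V R) * (k choose card V) \<le> card (SOP V R k)"
proof -
  let ?m = "card V"
  let ?Sub = "{S. S \<subseteq> {1..k} \<and> card S = ?m}"
  define \<Phi> :: "('a \<Rightarrow> nat) \<times> nat set \<Rightarrow> 'a \<Rightarrow> nat" where "\<Phi> p = restrict (\<lambda>v. sorted_list_of_set (snd p) ! (fst p v - 1)) V" for p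
  have cardD: "card (LEr V R \<times> ?Sub) = card (LEr V R) * (k choose ?m)"
    by (simp add: card_cartesian_product n_subsets)
  have key: "\<And>\<sigma> v. \<sigma> \<in> LEr V R \<Longrightarrow> v \<in> V \<Longrightarrow> \<sigma> v - 1 < ?m \<and> \<sigma> v \<ge> 1"
  proof -
    fix \<sigma> v assume "\<sigma> \<in> LEr V R" "v \<in> V"
    then have "\<sigma> v \<in> {1..?m}" unfolding LEr_def using bij_betwE by blast
    then show "\<sigma> v - 1 < ?m \<and> \<sigma> v \<ge> 1" by auto
  qed
  have into: "\<Phi> p \<in> SOP V R k" if p: "p \<in> LEr V R \<times> ?Sub" for p
  proof -
    obtain \<sigma> S where ps: "p = (\<sigma>, S)" "\<sigma> \<in> LEr V R" "S \<subseteq> {1..k}" "card S = ?m" using p by auto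
    have finS: "finite S" using ps(3) finite_subset by auto
    let ?xs = "sorted_list_of_set S"
    have len: "length ?xs = ?m" using ps by simp
    have setx: "set ?xs = S" using finS by simp
    have srt: "sorted_wrt (<) ?xs" by (simp add: strict_sorted_list_of_set)
    have "?xs ! (\<sigma> v - 1) \<in> {1..k}" if "v \<in> V" for v
      using key[OF ps(2) that] len setx ps(3) by (metis nth_mem subsetD)
    moreover have "?xs ! (\<sigma> u - 1) < ?xs ! (\<sigma> v - 1)" if "(u,v) \<in> R" for u v
    proof -
      have V: "u \<in> V" "v \<in> V" using that RV by auto
      have "\<sigma> u < \<sigma> v" using ps(2) V that unfolding LEr_def by auto
      then have "\<sigma> u - 1 < \<sigma> v - 1" using key[OF ps(2) V(1)] by auto
      then show ?thesis using sorted_wrt_nth_less[OF srt] key[OF ps(2) V(2)] len by auto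
    qed
    ultimately show ?thesis using RV unfolding SOP_def \<Phi>_def ps(1) by auto
  qed
  have inj: "inj_on \<Phi> (LEr V R \<times> ?Sub)"
  proof (rule inj_onI)
    fix p1 p2 assume p1: "p1 \<in> LEr V R \<times> ?Sub" and p2: "p2 \<in> LEr V R \<times> ?Sub" and eq: "\<Phi> p1 = \<Phi> p2"
    obtain \<sigma>1 S1 where ps1: "p1 = (\<sigma>1, S1)" "\<sigma>1 \<in> LEr V R" "S1 \<subseteq> {1..k}" "card S1 = ?m" using p1 by auto
    obtain \<sigma>2 S2 where ps2: "p2 = (\<sigma>2, S2)" "\<sigma>2 \<in> LEr V R" "S2 \<subseteq> {1..k}" "card S2 = ?m" using p2 by auto
    have img: "\<Phi> (\<sigma>, S) ` V = S" if "\<sigma> \<in> LEr V R" "S \<subseteq> {1..k}" "card S = ?m" for \<sigma> S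
    proof -
      have finS: "finite S" using that finite_subset by auto
      have b: "bij_betw \<sigma> V {1..?m}" using that unfolding LEr_def by auto
      have "(\<lambda>v. \<sigma> v - 1) ` V = (\<lambda>i. i - 1) ` {1..?m}" proof -
        have "(\<lambda>v. \<sigma> v - 1) ` V = (\<lambda>i. i - 1) ` (\<sigma> ` V)" by (simp add: image_image)
        then show ?thesis using b unfolding bij_betw_def by simp
      qed
      also have "\<dots> = {..<?m}"
      proof -
        have "{..<?m} = (\<lambda>i. i - 1) ` {1..?m}"
          by (auto simp: image_iff intro!: bexI[where x="Suc _"])
        then show ?thesis by simp
      qed
      finally have e1: "(\<lambda>v. \<sigma> v - 1) ` V = {..<?m}" .
      have "\<Phi> (\<sigma>, S) ` V = (\<lambda>i. sorted_list_of_set S ! i) ` ((\<lambda>v. \<sigma> v - 1) ` V)"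
        unfolding \<Phi>_def by (auto simp: image_iff)
      also have "\<dots> = set (sorted_list_of_set S)" using e1 that finS
        by (auto simp: set_conv_nth image_iff)
      finally show ?thesis using finS by simp
    qed
    have S: "S1 = S2" using img[OF ps1(2-4)] img[OF ps2(2-4)] eq ps1(1) ps2(1) by metis
    have "\<sigma>1 v = \<sigma>2 v" if v: "v \<in> V" for v
    proof -
      let ?xs = "sorted_list_of_set S1"
      have finS: "finite S1" using ps1(3) finite_subset by auto
      have d: "distinct ?xs" by simp
      have len: "length ?xs = ?m" using ps1 by simp
      have "?xs ! (\<sigma>1 v - 1) = ?xs ! (\<sigma>2 v - 1)"
        using fun_cong[OF eq, of v] v ps1(1) ps2(1) S unfolding \<Phi>_def by simp
      then have "\<sigma>1 v - 1 = \<sigma>2 v - 1"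
        using nth_eq_iff_index_eq[OF d] key[OF ps1(2) v] key[OF ps2(2) v] len by auto
      then show ?thesis using key[OF ps1(2) v] key[OF ps2(2) v] by auto
    qed
    then have "\<sigma>1 = \<sigma>2" using ps1(2) ps2(2) unfolding LEr_def by (auto intro: extensionalityI)
    then show "p1 = p2" using ps1(1) ps2(1) S by simp
  qed
  have "card (LEr V R \<times> ?Sub) \<le> card (SOP V R k)"
    by (rule card_inj_on_le[OF inj]) (use into finite_SOP[OF fin] in auto)
  then show ?thesis using cardD by simp
qed




lemma rank_LEr:
  assumes fin: "finite V" and h: "h \<in> SOP V R k" and inj: "inj_on h V" and RV: "R \<subseteq> V \<times> V"
  shows "restrict (\<lambda>v. card {u\<in>V. h u \<le> h v}) V \<in> LEr V R"
proof -
  let ?r = "\<lambda>v. card {u\<in>V. h u \<le> h v}"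
  have lt: "?r u < ?r v" if "u \<in> V" "v \<in> V" "h u < h v" for u v
  proof (rule psubset_card_mono)
    show "finite {u\<in>V. h u \<le> h v}" using fin by auto
    have "{w\<in>V. h w \<le> h u} \<subseteq> {u\<in>V. h u \<le> h v}" using that by auto
    moreover have "v \<in> {u\<in>V. h u \<le> h v}" "v \<notin> {w\<in>V. h w \<le> h u}" using that by auto
    ultimately show "{w\<in>V. h w \<le> h u} \<subset> {u\<in>V. h u \<le> h v}" by blast
  qed
  have injr: "inj_on ?r V"
  proof (rule inj_onI)
    fix u v assume uv: "u \<in> V" "v \<in> V" "?r u = ?r v"
    show "u = v"
    proof (rule ccontr)
      assume "u \<noteq> v"
      then have "h u \<noteq> h v" using inj uv by (meson inj_onD)
      then show False using lt[of u v] lt[of v u] uv by linarith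
    qed
  qed
  have rng: "?r v \<in> {1..card V}" if "v \<in> V" for v
  proof -
    have "v \<in> {u\<in>V. h u \<le> h v}" using that by auto
    then have "card {u\<in>V. h u \<le> h v} \<ge> 1" using fin by (metis (no_types, lifting) One_nat_def Suc_leI card_gt_0_iff empty_iff finite_subset mem_Collect_eq subsetI)
    moreover have "card {u\<in>V. h u \<le> h v} \<le> card V" using fin by (intro card_mono) auto
    ultimately show ?thesis by auto
  qed
  have "?r ` V = {1..card V}"
  proof (rule card_subset_eq)
    show "finite {1..card V}" by simp
    show "?r ` V \<subseteq> {1..card V}" using rng by auto
    show "card (?r ` V) = card {1..card V}" using card_image[OF injr] by simp
  qed
  then have "bij_betw (restrict ?r V) V {1..card V}"
    using injr unfolding bij_betw_def by (auto simp: inj_on_def)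
  moreover have "\<forall>u\<in>V. \<forall>v\<in>V. (u,v) \<in> R \<longrightarrow> restrict ?r V u < restrict ?r V v"
    using lt h unfolding SOP_def by auto
  ultimately show ?thesis unfolding LEr_def by auto
qed

lemma card_le_rank:
  assumes fin: "finite V" and inj: "inj_on h V" and v: "v \<in> V"
  shows "card {u\<in>V. h u \<le> h v} = card {s \<in> h ` V. s \<le> h v}"
proof -
  have "{s \<in> h ` V. s \<le> h v} = h ` {u\<in>V. h u \<le> h v}" by auto
  moreover have "inj_on h {u\<in>V. h u \<le> h v}" using inj by (auto simp: inj_on_def)
  ultimately show ?thesis by (simp add: card_image)
qed

lemma A5a:
  assumes fin: "finite V" and RV: "R \<subseteq> V \<times> V"
  shows "card {h \<in> SOP V R k. inj_on h V} \<le> card (LEr V R) * (k choose card V)"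
proof -
  let ?m = "card V"
  let ?Sub = "{S. S \<subseteq> {1..k} \<and> card S = ?m}"
  let ?I = "{h \<in> SOP V R k. inj_on h V}"
  define \<Psi> where "\<Psi> h = (restrict (\<lambda>v. card {u\<in>V. h u \<le> h v}) V, h ` V)" for h :: "'a \<Rightarrow> nat"
  have cardD: "card (LEr V R \<times> ?Sub) = card (LEr V R) * (k choose ?m)"
    by (simp add: card_cartesian_product n_subsets)
  have into: "\<Psi> h \<in> LEr V R \<times> ?Sub" if "h \<in> ?I" for h
  proof -
    have "h ` V \<subseteq> {1..k}" using that unfolding SOP_def by auto
    moreover have "card (h ` V) = ?m" using that by (simp add: card_image)
    ultimately show ?thesis using rank_LEr[OF fin _ _ RV, of h k] that unfolding \<Psi>_def by auto
  qed
  have inj: "inj_on \<Psi> ?I"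
  proof (rule inj_onI)
    fix h1 h2 assume h1: "h1 \<in> ?I" and h2: "h2 \<in> ?I" and eq: "\<Psi> h1 = \<Psi> h2"
    have S: "h1 ` V = h2 ` V" using eq unfolding \<Psi>_def by simp
    have finS: "finite (h1 ` V)" using fin by simp
    have "h1 v = h2 v" if v: "v \<in> V" for v
    proof -
      have "card {u\<in>V. h1 u \<le> h1 v} = card {u\<in>V. h2 u \<le> h2 v}"
        using fun_cong[OF arg_cong[OF eq, of fst], of v] v unfolding \<Psi>_def by simp
      then have c: "card {s \<in> h1 ` V. s \<le> h1 v} = card {s \<in> h1 ` V. s \<le> h2 v}"
        using card_le_rank[OF fin _ v, of h1] card_le_rank[OF fin _ v, of h2] h1 h2 S by simp
      have m1: "h1 v \<in> h1 ` V" "h2 v \<in> h1 ` V" using v S by auto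
      show ?thesis
      proof (rule ccontr)
        assume "h1 v \<noteq> h2 v"
        then consider "h1 v < h2 v" | "h2 v < h1 v" by linarith
        then show False
        proof cases
          case 1
          have a: "h2 v \<in> {s \<in> h1 ` V. s \<le> h2 v}" "h2 v \<notin> {s \<in> h1 ` V. s \<le> h1 v}" using 1 m1 by auto
          have "{s \<in> h1 ` V. s \<le> h1 v} \<subseteq> {s \<in> h1 ` V. s \<le> h2 v}" using 1 by auto
          then have "{s \<in> h1 ` V. s \<le> h1 v} \<subset> {s \<in> h1 ` V. s \<le> h2 v}" using a by blast
          then have "card {s \<in> h1 ` V. s \<le> h1 v} < card {s \<in> h1 ` V. s \<le> h2 v}"
            by (rule psubset_card_mono[rotated]) (use finS in auto)
          then show False using c by simp
        next
          case 2
          have a: "h1 v \<in> {s \<in> h1 ` V. s \<le> h1 v}" "h1 v \<notin> {s \<in> h1 ` V. s \<le> h2 v}" using 2 m1 by auto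
          have "{s \<in> h1 ` V. s \<le> h2 v} \<subseteq> {s \<in> h1 ` V. s \<le> h1 v}" using 2 by auto
          then have "{s \<in> h1 ` V. s \<le> h2 v} \<subset> {s \<in> h1 ` V. s \<le> h1 v}" using a by blast
          then have "card {s \<in> h1 ` V. s \<le> h2 v} < card {s \<in> h1 ` V. s \<le> h1 v}"
            by (rule psubset_card_mono[rotated]) (use finS in auto)
          then show False using c by simp
        qed
      qed
    qed
    then show "h1 = h2" using h1 h2 unfolding SOP_def by (auto simp: PiE_iff intro!: extensionalityI)
  qed
  have "card ?I \<le> card (LEr V R \<times> ?Sub)"
  proof (rule card_inj_on_le[OF inj])
    show "\<Psi> ` ?I \<subseteq> LEr V R \<times> ?Sub" using into by blast
    have "finite ?Sub" by (rule finite_subset[of _ "Pow {1..k}"]) auto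
    then show "finite (LEr V R \<times> ?Sub)" using finite_LEr[OF fin] by blast
  qed
  then show ?thesis using cardD by simp
qed

lemma card_eq_pair:
  assumes fin: "finite V" and u: "u \<in> V"
  shows "card {f \<in> V \<rightarrow>\<^sub>E {1..k}. f u = f v \<and> u \<noteq> v} \<le> k ^ (card V - 1)"
proof -
  let ?A = "{f \<in> V \<rightarrow>\<^sub>E {1..k}. f u = f v \<and> u \<noteq> v}"
  have inj: "inj_on (\<lambda>f. restrict f (V - {u})) ?A"
  proof (rule inj_onI)
    fix f g assume f: "f \<in> ?A" and g: "g \<in> ?A" and eq: "restrict f (V - {u}) = restrict g (V - {u})"
    have "f w = g w" if "w \<in> V" "w \<noteq> u" for w using fun_cong[OF eq, of w] that by simp
    moreover have "f u = g u"
    proof (cases "v \<in> V")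
      case True
      then show ?thesis using f g fun_cong[OF eq, of v] by auto
    next
      case False
      have "f v = undefined" "g v = undefined" using f g False by (auto simp: PiE_iff extensional_def)
      then show ?thesis using f g by auto
    qed
    ultimately have "\<forall>x\<in>V. f x = g x" by metis
    moreover have "f \<in> extensional V" "g \<in> extensional V" using f g by (auto simp: PiE_iff)
    ultimately show "f = g" by (metis extensionalityI)
  qed
  have "card ?A \<le> card ((V - {u}) \<rightarrow>\<^sub>E {1..k})"
  proof (rule card_inj_on_le[OF inj])
    show "(\<lambda>f. restrict f (V - {u})) ` ?A \<subseteq> (V - {u}) \<rightarrow>\<^sub>E {1..k}"
    proof
      fix x assume "x \<in> (\<lambda>f. restrict f (V - {u})) ` ?A"
      then obtain f where f0: "f \<in> ?A" and f2: "x = restrict f (V - {u})" by blast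
      have f1: "f \<in> V \<rightarrow>\<^sub>E {1..k}" using f0 by blast
      have "f \<in> Pi (V - {u}) (\<lambda>_. {1..k})" using f1 unfolding PiE_def Pi_def by blast
      then show "x \<in> (V - {u}) \<rightarrow>\<^sub>E {1..k}" using f2 by simp
    qed
    show "finite ((V - {u}) \<rightarrow>\<^sub>E {1..k})" using fin by (intro finite_PiE) auto
  qed
  also have "\<dots> = k ^ (card V - 1)" using fin u by (simp add: card_PiE)
  finally show ?thesis .
qed

lemma finPiE_sub: "finite V \<Longrightarrow> finite {f \<in> V \<rightarrow>\<^sub>E {1..(k::nat)}. P f}"
  by (rule finite_subset[of _ "V \<rightarrow>\<^sub>E {1..k}"]) (auto intro: finite_PiE)

lemma A5b:
  assumes fin: "finite V"
  shows "card {f \<in> V \<rightarrow>\<^sub>E {1..k}. \<not> inj_on f V} \<le> card V * card V * k ^ (card V - 1)"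
proof -
  have sub: "{f \<in> V \<rightarrow>\<^sub>E {1..k}. \<not> inj_on f V} \<subseteq> (\<Union>u\<in>V. \<Union>v\<in>V. {f \<in> V \<rightarrow>\<^sub>E {1..k}. f u = f v \<and> u \<noteq> v})"
    unfolding inj_on_def by blast
  have "card (\<Union>u\<in>V. \<Union>v\<in>V. {f \<in> V \<rightarrow>\<^sub>E {1..k}. f u = f v \<and> u \<noteq> v})
      \<le> (\<Sum>u\<in>V. card (\<Union>v\<in>V. {f \<in> V \<rightarrow>\<^sub>E {1..k}. f u = f v \<and> u \<noteq> v}))" by (rule card_UN_le[OF fin])
  also have "\<dots> \<le> (\<Sum>u\<in>V. (\<Sum>v\<in>V. card {f \<in> V \<rightarrow>\<^sub>E {1..k}. f u = f v \<and> u \<noteq> v}))"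
    by (intro sum_mono card_UN_le[OF fin])
  also have "\<dots> \<le> (\<Sum>u\<in>V. (\<Sum>v\<in>V. k ^ (card V - 1)))"
    by (intro sum_mono card_eq_pair[OF fin]) auto
  also have "\<dots> = card V * card V * k ^ (card V - 1)" by simp
  finally have "card (\<Union>u\<in>V. \<Union>v\<in>V. {f \<in> V \<rightarrow>\<^sub>E {1..k}. f u = f v \<and> u \<noteq> v}) \<le> card V * card V * k ^ (card V - 1)" .
  moreover have "finite (\<Union>u\<in>V. \<Union>v\<in>V. {f \<in> V \<rightarrow>\<^sub>E {1..k}. f u = f v \<and> u \<noteq> v})"
    using fin finPiE_sub[OF fin] by (intro finite_UN_I) blast+
  ultimately show ?thesis using card_mono[OF _ sub] by (meson order_trans)
qed

lemma A5:
  assumes fin: "finite V" and RV: "R \<subseteq> V \<times> V"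
  shows "card (SOP V R k) \<le> card (LEr V R) * (k choose card V) + card V * card V * k ^ (card V - 1)"
proof -
  have sub: "SOP V R k \<subseteq> {h \<in> SOP V R k. inj_on h V} \<union> {f \<in> V \<rightarrow>\<^sub>E {1..k}. \<not> inj_on f V}"
    unfolding SOP_def by auto
  have "card (SOP V R k) \<le> card ({h \<in> SOP V R k. inj_on h V} \<union> {f \<in> V \<rightarrow>\<^sub>E {1..k}. \<not> inj_on f V})"
    by (rule card_mono[OF finite_UnI[OF finite_subset[OF _ finite_SOP[OF fin]] finPiE_sub[OF fin]] sub]) blast
  also have "\<dots> \<le> card {h \<in> SOP V R k. inj_on h V} + card {f \<in> V \<rightarrow>\<^sub>E {1..k}. \<not> inj_on f V}"
    by (rule card_Un_le)
  finally show ?thesis using A5a[OF fin RV, of k] A5b[OF fin, of k] by linarith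
qed




lemma chain_ineq:
  assumes fin: "finite V" and RV: "R \<subseteq> V \<times> V" and RV': "R' \<subseteq> V \<times> V" and wf: "wf R"
    and tr': "trans R'" and irr': "\<And>x. (x,x) \<notin> R'"
    and comp: "\<And>x y. (x,y) \<in> R' \<Longrightarrow> (x,y) \<in> R \<or> (y,x) \<in> R"
    and X: "X \<subseteq> GC V R' k" "X \<inter> GC V R k = {}"
  shows "card (LEr V R) * (k choose card V) + card X
         \<le> card (LEr V R') * (k choose card V) + card V * card V * k ^ (card V - 1)"
proof -
  have 1: "card (LEr V R) * (k choose card V) \<le> card (SOP V R k)" by (rule A4[OF fin RV])
  have 2: "card (SOP V R k) \<le> card (GC V R k)" by (rule A1[OF fin wf RV])
  have finX: "finite X" using X(1) finite_GC[OF fin] finite_subset by blast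
  have "card (GC V R k) + card X = card (GC V R k \<union> X)"
    using X(2) finX finite_GC[OF fin] by (simp add: card_Un_disjoint inf_commute)
  also have "\<dots> \<le> card (GC V R' k)"
    using A3[of R' R V k] comp X(1) finite_GC[OF fin] by (intro card_mono) auto
  finally have 3: "card (GC V R k) + card X \<le> card (GC V R' k)" .
  have 4: "card (GC V R' k) \<le> card (SOP V R' k)" by (rule A2[OF fin tr' irr' RV'])
  have 5: "card (SOP V R' k) \<le> card (LEr V R') * (k choose card V) + card V * card V * k ^ (card V - 1)"
    by (rule A5[OF fin RV'])
  show ?thesis using 1 2 3 4 5 by linarith
qed

lemma binom_lower:
  assumes "m > 0"
  shows "t ^ m \<le> (m * t) choose m"
proof (cases "t = 0")
  case True then show ?thesis using assms by (simp add: power_0_left)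
next
  case False
  have "m \<le> m * t" using False by simp
  then have "(real (m * t) / real m) ^ m \<le> real ((m * t) choose m)"
    by (rule binomial_ge_n_over_k_pow_k)
  moreover have "real (m * t) / real m = real t" using assms by simp
  ultimately have "real (t ^ m) \<le> real ((m * t) choose m)" by simp
  then show ?thesis by linarith
qed

lemma B1:
  assumes fin: "finite V" and ne: "V \<noteq> {}" and RV: "R \<subseteq> V \<times> V" and RV': "R' \<subseteq> V \<times> V" and wf: "wf R"
    and tr': "trans R'" and irr': "\<And>x. (x,x) \<notin> R'"
    and comp: "\<And>x y. (x,y) \<in> R' \<Longrightarrow> (x,y) \<in> R \<or> (y,x) \<in> R"
  shows "card (LEr V R) \<le> card (LEr V R')"
proof (rule ccontr)
  assume "\<not> ?thesis"
  then have lt: "card (LEr V R') + 1 \<le> card (LEr V R)" by simp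
  define m where "m = card V"
  have m0: "m > 0" using fin ne unfolding m_def by auto
  have key: "k choose m \<le> m * m * k ^ (m - 1)" for k
  proof -
    have "card (LEr V R) * (k choose m) + card {} \<le> card (LEr V R') * (k choose m) + m * m * k ^ (m - 1)"
      using chain_ineq[OF fin RV RV' wf tr' irr' comp, where X="{}" and k=k] unfolding m_def by simp
    moreover have "(card (LEr V R') + 1) * (k choose m) \<le> card (LEr V R) * (k choose m)"
      using lt by (rule mult_right_mono) simp
    ultimately show ?thesis by (simp add: algebra_simps)
  qed
  define t where "t = m ^ (m + 1) + 1"
  have "t ^ m \<le> m * m * (m * t) ^ (m - 1)"
    using binom_lower[OF m0, of t] key[of "m * t"] by linarith
  also have "\<dots> = m ^ (m + 1) * t ^ (m - 1)"
  proof -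
    have "m * m * (m * t) ^ (m - 1) = m * m * m ^ (m - 1) * t ^ (m - 1)" by (simp add: power_mult_distrib)
    also have "m * m * m ^ (m - 1) = m ^ (m + 1)"
    proof -
      obtain j where "m = Suc j" using m0 by (cases m) auto
      then show ?thesis by (simp add: algebra_simps)
    qed
    finally show ?thesis by simp
  qed
  also have "\<dots> < t * t ^ (m - 1)"
  proof (rule mult_strict_right_mono)
    show "m ^ (m + 1) < t" unfolding t_def by simp
    show "0 < t ^ (m - 1)" unfolding t_def by simp
  qed
  also have "\<dots> = t ^ m"
  proof -
    obtain j where "m = Suc j" using m0 by (cases m) auto
    then show ?thesis by simp
  qed
  finally show False by simp
qed

lemma B2:
  assumes fin: "finite V" and ne: "V \<noteq> {}" and RV: "R \<subseteq> V \<times> V" and RV': "R' \<subseteq> V \<times> V" and wf: "wf R"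
    and tr': "trans R'" and irr': "\<And>x. (x,x) \<notin> R'"
    and comp: "\<And>x y. (x,y) \<in> R' \<Longrightarrow> (x,y) \<in> R \<or> (y,x) \<in> R"
    and big: "\<And>t. \<exists>X. X \<subseteq> GC V R' (12 * t) \<and> X \<inter> GC V R (12 * t) = {} \<and> t ^ card V \<le> card X"
  shows "card (LEr V R) < card (LEr V R')"
proof (rule ccontr)
  assume "\<not> ?thesis"
  then have le: "card (LEr V R') \<le> card (LEr V R)" by simp
  define m where "m = card V"
  have m0: "m > 0" using fin ne unfolding m_def by auto
  have key: "t ^ m \<le> m * m * (12 * t) ^ (m - 1)" for t
  proof -
    obtain X where X: "X \<subseteq> GC V R' (12 * t)" "X \<inter> GC V R (12 * t) = {}" "t ^ m \<le> card X"
      using big[of t] unfolding m_def by auto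
    have "card (LEr V R) * ((12 * t) choose m) + card X \<le> card (LEr V R') * ((12*t) choose m) + m * m * (12 * t) ^ (m - 1)"
      unfolding m_def by (rule chain_ineq[OF fin RV RV' wf tr' irr' comp X(1,2)])
    moreover have "card (LEr V R') * ((12*t) choose m) \<le> card (LEr V R) * ((12*t) choose m)"
      using le by (rule mult_right_mono) simp
    ultimately show ?thesis using X(3) by linarith
  qed
  define t where "t = m * m * 12 ^ (m - 1) + 1"
  have "t ^ m \<le> m * m * (12 * t) ^ (m - 1)" by (rule key)
  also have "\<dots> = (m * m * 12 ^ (m - 1)) * t ^ (m - 1)" by (simp add: power_mult_distrib)
  also have "\<dots> < t * t ^ (m - 1)"
  proof (rule mult_strict_right_mono)
    show "m * m * 12 ^ (m - 1) < t" unfolding t_def by simp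
    show "0 < t ^ (m - 1)" unfolding t_def by simp
  qed
  also have "\<dots> = t ^ m"
  proof -
    obtain j where "m = Suc j" using m0 by (cases m) auto
    then show ?thesis by simp
  qed
  finally show False by simp
qed




definition sc :: "nat \<Rightarrow> nat \<Rightarrow> nat" where "sc m i = Suc i mod m"
definition pc :: "nat \<Rightarrow> nat \<Rightarrow> nat" where "pc m i = (i + m - 1) mod m"

lemma sc_if: "i < m \<Longrightarrow> sc m i = (if Suc i = m then 0 else Suc i)"
  unfolding sc_def by auto

lemma pc_if: "i < m \<Longrightarrow> pc m i = (if i = 0 then m - 1 else i - 1)"
proof -
  assume i: "i < m"
  show ?thesis
  proof (cases "i = 0")
    case True then show ?thesis using i unfolding pc_def by simp
  next
    case False
    then have "i + m - 1 = (i - 1) + m" by simp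
    then have "(i + m - 1) mod m = (i - 1) mod m" by simp
    then show ?thesis using False i unfolding pc_def by simp
  qed
qed

lemma sc_lt: "0 < m \<Longrightarrow> sc m i < m" unfolding sc_def by simp
lemma pc_lt: "0 < m \<Longrightarrow> pc m i < m" unfolding pc_def by simp

lemma sc_pc: "i < m \<Longrightarrow> sc m (pc m i) = i"
  by (simp add: sc_if pc_if pc_lt)

lemma pc_sc: "i < m \<Longrightarrow> pc m (sc m i) = i"
  by (auto simp: sc_if pc_if sc_lt)

lemma sc_neq: "3 \<le> m \<Longrightarrow> i < m \<Longrightarrow> sc m i \<noteq> i"
  by (auto simp: sc_if)

lemma pc_neq: "3 \<le> m \<Longrightarrow> i < m \<Longrightarrow> pc m i \<noteq> i"
  by (auto simp: pc_if)

lemma pc_neq_sc: "3 \<le> m \<Longrightarrow> i < m \<Longrightarrow> pc m i \<noteq> sc m i"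
  by (auto simp: pc_if sc_if)

lemma sc_inj: "i < m \<Longrightarrow> j < m \<Longrightarrow> sc m i = sc m j \<Longrightarrow> i = j"
  by (metis pc_sc)

lemma scsc_neq: "3 \<le> m \<Longrightarrow> i < m \<Longrightarrow> sc m (sc m i) \<noteq> i"
  by (auto simp: sc_if)

lemma cycle_edge_eq: "{u,v} \<in> cycle_edges m \<longleftrightarrow> (\<exists>i<m. {u,v} = {i, sc m i})"
  unfolding cycle_edges_def sc_def by auto

lemma O1:
  assumes "is_orientation (cycle_edges m) D" "(u,v) \<in> D" "3 \<le> m"
  shows "u < m \<and> v < m \<and> (v = sc m u \<or> u = sc m v)"
proof -
  have "{u,v} \<in> cycle_edges m" using assms(1,2) unfolding is_orientation_def by auto
  then obtain i where i: "i < m" "{u,v} = {i, sc m i}" using cycle_edge_eq by blast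
  have "sc m i < m" using sc_lt[of m i] assms(3) by simp
  then show ?thesis using i by (auto simp: doubleton_eq_iff)
qed

lemma O2:
  assumes "is_orientation (cycle_edges m) D" "(u,v) \<in> D"
  shows "(v,u) \<notin> D"
proof -
  have "{u,v} \<in> cycle_edges m" using assms(1,2) unfolding is_orientation_def by auto
  then obtain a b where ab: "{u,v} = {a,b}" "a \<noteq> b"
    "((a,b) \<in> D \<and> (b,a) \<notin> D) \<or> ((b,a) \<in> D \<and> (a,b) \<notin> D)"
    using assms(1) unfolding is_orientation_def by blast
  then show ?thesis using assms(2) by (auto simp: doubleton_eq_iff)
qed

lemma O3:
  assumes "is_orientation (cycle_edges m) D" "i < m"
  shows "(i, sc m i) \<in> D \<or> (sc m i, i) \<in> D"
proof -
  have "{i, sc m i} \<in> cycle_edges m" using assms(2) cycle_edge_eq by blast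
  then obtain a b where ab: "{i, sc m i} = {a,b}"
    "((a,b) \<in> D \<and> (b,a) \<notin> D) \<or> ((b,a) \<in> D \<and> (a,b) \<notin> D)"
    using assms(1) unfolding is_orientation_def by blast
  then show ?thesis by (auto simp: doubleton_eq_iff)
qed

lemma O_irr:
  assumes "is_orientation (cycle_edges m) D" "(u,v) \<in> D" "3 \<le> m"
  shows "u \<noteq> v"
  using O1[OF assms] sc_neq[OF assms(3)] by metis

lemma O_sub:
  assumes "is_orientation (cycle_edges m) D" "3 \<le> m"
  shows "D \<subseteq> {0..<m} \<times> {0..<m}"
  using O1[OF assms(1) _ assms(2)] by auto

lemma O_nb:
  assumes "is_orientation (cycle_edges m) D" "(u,v) \<in> D" "3 \<le> m"
  shows "u = pc m v \<or> u = sc m v"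
  using O1[OF assms] pc_sc by auto

lemma O_nb2:
  assumes "is_orientation (cycle_edges m) D" "(v,u) \<in> D" "3 \<le> m"
  shows "u = pc m v \<or> u = sc m v"
  using O1[OF assms] pc_sc by auto

lemma twopath:
  assumes "is_orientation (cycle_edges m) D" "3 \<le> m" "(x,y) \<in> D" "(y,z) \<in> D"
  shows "(x = pc m y \<and> z = sc m y) \<or> (x = sc m y \<and> z = pc m y)"
proof -
  have "x \<noteq> z" using O2[OF assms(1,3)] assms(4) by auto
  then show ?thesis using O_nb[OF assms(1,3,2)] O_nb2[OF assms(1,4,2)] by auto
qed

definition mids :: "('a \<times> 'a) set \<Rightarrow> 'a set" where
  "mids D = {y. \<exists>x z. (x,y) \<in> D \<and> (y,z) \<in> D}"

lemma card_2paths: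
  assumes "is_orientation (cycle_edges m) D" "3 \<le> m"
  shows "card (directed_2paths D) = card (mids D)"
proof -
  have inj: "inj_on (\<lambda>(x,y,z). y) (directed_2paths D)"
  proof (rule inj_onI)
    fix p q assume p: "p \<in> directed_2paths D" and q: "q \<in> directed_2paths D"
      and eq: "(\<lambda>(x,y,z). y) p = (\<lambda>(x,y,z). y) q"
    obtain x y z where pp: "p = (x,y,z)" "(x,y) \<in> D" "(y,z) \<in> D" using p unfolding directed_2paths_def by auto
    obtain x' y' z' where qq: "q = (x',y',z')" "(x',y') \<in> D" "(y',z') \<in> D" using q unfolding directed_2paths_def by auto
    have yy: "y' = y" using eq pp qq by simp
    have a: "(x = pc m y \<and> z = sc m y) \<or> (x = sc m y \<and> z = pc m y)" using twopath[OF assms pp(2,3)] .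
    have b: "(x' = pc m y \<and> z' = sc m y) \<or> (x' = sc m y \<and> z' = pc m y)" using twopath[OF assms qq(2,3)] yy by simp
    show "p = q" using a b pp qq yy O2[OF assms(1)] by fastforce
  qed
  have "(\<lambda>(x,y,z). y) ` directed_2paths D = mids D"
    unfolding directed_2paths_def mids_def by (auto simp: image_iff)
  then show ?thesis using card_image[OF inj] by simp
qed




lemma AC1:
  assumes D: "is_orientation (cycle_edges m) D" and m3: "3 \<le> m" and odd: "odd m"
  shows "mids D \<noteq> {}"
proof
  assume none: "mids D = {}"
  define dir where "dir i = ((i, sc m i) \<in> D)" for i
  have alt: "dir (pc m y) \<noteq> dir y" if y: "y < m" for y
  proof
    assume eq: "dir (pc m y) = dir y"
    have py: "pc m y < m" using pc_lt m3 by simp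
    show False
    proof (cases "dir y")
      case True
      then have "(pc m y, y) \<in> D" "(y, sc m y) \<in> D" using eq unfolding dir_def by (auto simp: sc_pc[OF y])
      then have "y \<in> mids D" unfolding mids_def by blast
      then show False using none by simp
    next
      case False
      then have "\<not> dir (pc m y)" using eq by simp
      then have "(y, pc m y) \<in> D" using O3[OF D py] unfolding dir_def by (auto simp: sc_pc[OF y])
      moreover have "(sc m y, y) \<in> D" using O3[OF D y] False unfolding dir_def by auto
      ultimately have "y \<in> mids D" unfolding mids_def by blast
      then show False using none by simp
    qed
  qed
  have par: "i < m \<Longrightarrow> dir i = (dir 0 = even i)" for i
  proof (induction i)
    case 0 then show ?case by simp
  next
    case (Suc i)
    have "pc m (Suc i) = i" using Suc.prems by (simp add: pc_if)
    then have "dir i \<noteq> dir (Suc i)" using alt[OF Suc.prems] by simp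
    then show ?case using Suc by auto
  qed
  have "pc m 0 = m - 1" using m3 by (simp add: pc_if)
  moreover have "even (m - 1)" using odd m3 by simp
  ultimately have "dir (pc m 0) = dir 0" using par[of "m - 1"] m3 by simp
  then show False using alt[of 0] m3 by simp
qed

lemma mid_dir:
  assumes D: "is_orientation (cycle_edges m) D" and m3: "3 \<le> m" and y: "y \<in> mids D"
  shows "((pc m y, y) \<in> D \<and> (y, sc m y) \<in> D) \<or> ((sc m y, y) \<in> D \<and> (y, pc m y) \<in> D)"
proof -
  obtain x z where xz: "(x,y) \<in> D" "(y,z) \<in> D" using y unfolding mids_def by auto
  show ?thesis using twopath[OF D m3 xz] xz by auto
qed

lemma mid_eq:
  assumes D: "is_orientation (cycle_edges m) D" and m3: "3 \<le> m" and y: "y \<in> mids D"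
  shows "((pc m y, sc m (pc m y)) \<in> D) = ((y, sc m y) \<in> D)"
proof -
  have yl: "y < m" using y O1[OF D _ m3] unfolding mids_def by blast
  have sp: "sc m (pc m y) = y" using sc_pc[OF yl] .
  from mid_dir[OF D m3 y] show ?thesis
  proof
    assume "(pc m y, y) \<in> D \<and> (y, sc m y) \<in> D"
    then show ?thesis using sp by simp
  next
    assume a: "(sc m y, y) \<in> D \<and> (y, pc m y) \<in> D"
    then have "(y, sc m y) \<notin> D" "(pc m y, y) \<notin> D" using O2[OF D] by blast+
    then show ?thesis using sp by simp
  qed
qed

lemma AC2:
  assumes D: "is_orientation (cycle_edges 3) D" and ac: "acyclic D"
    and c: "c \<in> mids D" and c': "c' \<in> mids D" and ne: "c \<noteq> c'"
  shows False
proof -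
  have s: "sc 3 0 = 1" "sc 3 1 = 2" "sc 3 2 = 0" by (simp_all add: sc_def)
  have p: "pc 3 0 = 2" "pc 3 1 = 0" "pc 3 2 = 1" by (simp_all add: pc_def)
  have lt: "c < 3" "c' < 3" using O1[OF D _ order_refl] c c' unfolding mids_def by blast+
  define dir where "dir i = ((i, sc 3 i) \<in> D)" for i
  have e: "dir (pc 3 y) = dir y" if "y \<in> mids D" for y
    using mid_eq[OF D order_refl that] unfolding dir_def .
  have e0: "dir 2 = dir 0" if "0 \<in> mids D" using e[OF that] p by simp
  have e1: "dir 0 = dir 1" if "1 \<in> mids D" using e[OF that] p by simp
  have e2: "dir 1 = dir 2" if "2 \<in> mids D" using e[OF that] p by simp
  have "c = 0 \<or> c = 1 \<or> c = 2" "c' = 0 \<or> c' = 1 \<or> c' = 2" using lt by auto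
  then have all: "dir 0 = dir 1 \<and> dir 1 = dir 2"
  proof (elim disjE)
  qed (use e0 e1 e2 c c' ne in simp_all)
  have o3: "(i, sc 3 i) \<in> D \<or> (sc 3 i, i) \<in> D" if "i < 3" for i using O3[OF D that] .
  show False
  proof (cases "dir 0")
    case True
    then have d: "(0,1) \<in> D" "(1,2) \<in> D" "(2,0) \<in> D" using all s unfolding dir_def by auto
    have "(0::nat,1) \<in> D\<^sup>+" using d(1) by (rule r_into_trancl)
    then have "(0::nat,2) \<in> D\<^sup>+" using d(2) by (rule trancl_into_trancl)
    then have "(0::nat,0) \<in> D\<^sup>+" using d(3) by (rule trancl_into_trancl)
    then show False using ac unfolding acyclic_def by blast
  next
    case False
    then have "\<not> dir 0" "\<not> dir 1" "\<not> dir 2" using all by auto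
    then have d: "(1,0) \<in> D" "(2,1) \<in> D" "(0,2) \<in> D" using o3[of 0] o3[of 1] o3[of 2] s unfolding dir_def by auto
    have "(0::nat,2) \<in> D\<^sup>+" using d(3) by (rule r_into_trancl)
    then have "(0::nat,1) \<in> D\<^sup>+" using d(2) by (rule trancl_into_trancl)
    then have "(0::nat,0) \<in> D\<^sup>+" using d(1) by (rule trancl_into_trancl)
    then show False using ac unfolding acyclic_def by blast
  qed
qed

lemma CP1:
  assumes D: "is_orientation (cycle_edges m) D" and i: "i < m"
  shows "(i, sc m i) \<in> D\<^sup>+ \<or> (sc m i, i) \<in> D\<^sup>+"
  using O3[OF D i] by auto

lemma CP2:
  assumes D: "is_orientation (cycle_edges m) D" and m3: "3 \<le> m" and y: "y \<in> mids D"
  shows "(pc m y, sc m y) \<in> D\<^sup>+ \<or> (sc m y, pc m y) \<in> D\<^sup>+"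
  using mid_dir[OF D m3 y] by (meson trancl.simps)

lemma G2P:
  assumes P: "directed_2paths D = {(a,b,d)}" and irr: "\<And>u v. (u,v) \<in> D \<Longrightarrow> u \<noteq> v" and ad: "a \<noteq> d"
    and xy: "(x,y) \<in> D \<union> {(a,d)}" and yz: "(y,z) \<in> D \<union> {(a,d)}"
  shows "x = a \<and> y = b \<and> z = d"
proof -
  have "(a,b,d) \<in> directed_2paths D" using P by simp
  then have ab: "(a,b) \<in> D" "(b,d) \<in> D" unfolding directed_2paths_def by auto
  have tp: "p = a \<and> q = b \<and> r = d" if "(p,q) \<in> D" "(q,r) \<in> D" for p q r
  proof -
    have "(p,q,r) \<in> directed_2paths D" using that unfolding directed_2paths_def by simp
    then show ?thesis using P by simp
  qed
  have nab: "a \<noteq> b" "b \<noteq> d" using ab irr by auto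
  show ?thesis
  proof (cases "(x,y) \<in> D")
    case T1: True
    show ?thesis
    proof (cases "(y,z) \<in> D")
      case True show ?thesis by (rule tp[OF T1 True])
    next
      case False
      then have ya: "y = a" using yz by auto
      have "(y,b) \<in> D" using ab(1) ya by simp
      then have "y = b" using tp[OF T1] by blast
      then show ?thesis using nab ya by simp
    qed
  next
    case F1: False
    then have xy': "x = a" "y = d" using xy by auto
    show ?thesis
    proof (cases "(y,z) \<in> D")
      case True
      then have "(d,z) \<in> D" using xy' by simp
      then have "b = a" using tp[OF ab(2)] by blast
      then show ?thesis using nab by simp
    next
      case False
      then have "y = a" using yz by auto
      then show ?thesis using xy' ad by simp
    qed
  qed
qed

lemma TR:
  assumes P: "directed_2paths D = {(a,b,d)}" and irr: "\<And>u v. (u,v) \<in> D \<Longrightarrow> u \<noteq> v" and ad: "a \<noteq> d"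
  shows "D\<^sup>+ = D \<union> {(a,d)}"
proof
  have "trans (D \<union> {(a,d)})"
  proof (rule transI)
    fix x y z assume a1: "(x,y) \<in> D \<union> {(a,d)}" and a2: "(y,z) \<in> D \<union> {(a,d)}"
    have "x = a \<and> y = b \<and> z = d" using G2P[OF P irr ad a1 a2] .
    then show "(x,z) \<in> D \<union> {(a,d)}" by simp
  qed
  then have tid: "(D \<union> {(a,d)})\<^sup>+ = D \<union> {(a,d)}" by (rule trancl_id)
  have "D\<^sup>+ \<subseteq> (D \<union> {(a,d)})\<^sup>+" by (rule trancl_mono_subset) auto
  then show "D\<^sup>+ \<subseteq> D \<union> {(a,d)}" using tid by simp
next
  have "(a,b,d) \<in> directed_2paths D" using P by simp
  then have ab: "(a,b) \<in> D" "(b,d) \<in> D" unfolding directed_2paths_def by auto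
  then show "D \<union> {(a,d)} \<subseteq> D\<^sup>+" by (auto intro: trancl_into_trancl)
qed




definition dA :: "nat \<Rightarrow> nat \<Rightarrow> nat \<Rightarrow> bool" where
  "dA m c i = even ((i + m - c) mod m)"

definition ABo :: "nat \<Rightarrow> nat \<Rightarrow> (nat \<times> nat) set" where
  "ABo m c = {(i, sc m i) | i. i < m \<and> dA m c i} \<union> {(sc m i, i) | i. i < m \<and> \<not> dA m c i}"

lemma AB_mem: "(u,v) \<in> ABo m c \<longleftrightarrow> (u < m \<and> v = sc m u \<and> dA m c u) \<or> (v < m \<and> u = sc m v \<and> \<not> dA m c v)"
  unfolding ABo_def by auto

lemma fmod: "i < (m::nat) \<Longrightarrow> c < m \<Longrightarrow> (i + m - c) mod m = (if c \<le> i then i - c else i + m - c)"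
proof -
  assume a: "i < m" "c < m"
  show ?thesis
  proof (cases "c \<le> i")
    case True
    then have "i + m - c = (i - c) + m" by arith
    then have "(i + m - c) mod m = (i - c) mod m" by (metis mod_add_self2)
    then show ?thesis using True a by simp
  next
    case False then show ?thesis using a by simp
  qed
qed

lemma addmod: "u < (m::nat) \<Longrightarrow> j < m \<Longrightarrow> (u + j) mod m = (if u + j < m then u + j else u + j - m)"
proof -
  assume a: "u < m" "j < m"
  show ?thesis
  proof (cases "u + j < m")
    case False
    then have "u + j = (u + j - m) + m" by arith
    then have "(u + j) mod m = (u + j - m) mod m" by (metis mod_add_self2)
    then show ?thesis using False a by simp
  qed simp
qed

lemma dA_pc:
  assumes "y < m" "c < m" "odd m" "3 \<le> m"
  shows "(dA m c (pc m y) = dA m c y) \<longleftrightarrow> y = c"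
proof -
  have py: "pc m y < m" using pc_lt assms by simp
  have e1: "dA m c y = even (if c \<le> y then y - c else y + m - c)"
    unfolding dA_def using fmod[OF assms(1,2)] by simp
  have e2: "dA m c (pc m y) = even (if c \<le> pc m y then pc m y - c else pc m y + m - c)"
    unfolding dA_def using fmod[OF py assms(2)] by simp
  show ?thesis unfolding e1 e2 unfolding pc_if[OF assms(1)] using assms
    by (cases "y = 0"; cases "c \<le> y"; cases "y = c"; simp; presburger)
qed

lemma dA_c: "c < m \<Longrightarrow> dA m c c"
  unfolding dA_def by simp

lemma AB_orient:
  assumes m3: "3 \<le> m"
  shows "is_orientation (cycle_edges m) (ABo m c)"
  unfolding is_orientation_def
proof (intro conjI ballI)
  fix p assume "p \<in> ABo m c"
  then obtain u v where p: "p = (u,v)" "(u,v) \<in> ABo m c" by (cases p) auto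
  then have "{u,v} \<in> cycle_edges m" unfolding AB_mem cycle_edge_eq by (auto simp: insert_commute)
  then show "case p of (u, v) \<Rightarrow> {u, v} \<in> cycle_edges m" using p by simp
next
  fix e assume "e \<in> cycle_edges m"
  then obtain i where i: "i < m" "e = {i, sc m i}" unfolding cycle_edges_def sc_def by auto
  have si: "sc m i < m" using sc_lt m3 by simp
  have n1: "sc m (sc m i) \<noteq> i" using scsc_neq[OF m3 i(1)] .
  have "(i, sc m i) \<in> ABo m c \<longleftrightarrow> dA m c i" unfolding AB_mem using i n1 si by auto
  moreover have "(sc m i, i) \<in> ABo m c \<longleftrightarrow> \<not> dA m c i" unfolding AB_mem using i n1 si by auto
  moreover have "i \<noteq> sc m i" using sc_neq[OF m3 i(1)] by simp
  ultimately show "\<exists>u v. e = {u, v} \<and> u \<noteq> v \<and>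
          ((u, v) \<in> ABo m c \<and> (v, u) \<notin> ABo m c \<or> (v, u) \<in> ABo m c \<and> (u, v) \<notin> ABo m c)"
    using i by blast
qed

lemma AB_2paths:
  assumes m3: "3 \<le> m" and odd: "odd m" and c: "c < m"
  shows "directed_2paths (ABo m c) = {(pc m c, c, sc m c)}"
proof
  have D: "is_orientation (cycle_edges m) (ABo m c)" by (rule AB_orient[OF m3])
  show "directed_2paths (ABo m c) \<subseteq> {(pc m c, c, sc m c)}"
  proof
    fix p assume "p \<in> directed_2paths (ABo m c)"
    then obtain x y z where p: "p = (x,y,z)" "(x,y) \<in> ABo m c" "(y,z) \<in> ABo m c"
      unfolding directed_2paths_def by auto
    have y: "y < m" using O1[OF D p(2) m3] by simp
    have py: "pc m y < m" using pc_lt m3 by simp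
    have spy: "sc m (pc m y) = y" using sc_pc[OF y] .
    have pns: "pc m y \<noteq> sc m y" using pc_neq_sc[OF m3 y] .
    have ssn: "sc m (sc m y) \<noteq> y" using scsc_neq[OF m3 y] .
    from twopath[OF D m3 p(2,3)] show "p \<in> {(pc m c, c, sc m c)}"
    proof
      assume a: "x = pc m y \<and> z = sc m y"
      then have "dA m c (pc m y)" "dA m c y" using p(2,3) pns spy ssn unfolding AB_mem by auto
      then have "y = c" using dA_pc[OF y c odd m3] by simp
      then show ?thesis using a p(1) by simp
    next
      assume a: "x = sc m y \<and> z = pc m y"
      then have "\<not> dA m c (pc m y)" "\<not> dA m c y" using p(2,3) pns spy ssn unfolding AB_mem by auto
      then have "y = c" using dA_pc[OF y c odd m3] by simp
      then show ?thesis using \<open>\<not> dA m c y\<close> dA_c[OF c] by simp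
    qed
  qed
next
  have pc: "pc m c < m" using pc_lt m3 by simp
  have "(pc m c, c) \<in> ABo m c"
  proof -
    have "dA m c (pc m c)" using dA_pc[OF c c odd m3] dA_c[OF c] by simp
    then show ?thesis unfolding AB_mem using pc sc_pc[OF c] by auto
  qed
  moreover have "(c, sc m c) \<in> ABo m c" unfolding AB_mem using c dA_c[OF c] by auto
  ultimately show "{(pc m c, c, sc m c)} \<subseteq> directed_2paths (ABo m c)"
    unfolding directed_2paths_def by auto
qed

lemma AB_trancl:
  assumes m3: "3 \<le> m" and odd: "odd m" and c: "c < m"
  shows "(ABo m c)\<^sup>+ = ABo m c \<union> {(pc m c, sc m c)}"
  by (rule TR[OF AB_2paths[OF m3 odd c]]) (use O_irr[OF AB_orient[OF m3] _ m3] pc_neq_sc[OF m3 c] in auto)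

lemma AB_acyclic:
  assumes m3: "3 \<le> m" and odd: "odd m" and c: "c < m"
  shows "acyclic (ABo m c)"
  unfolding acyclic_def AB_trancl[OF m3 odd c]
  using O_irr[OF AB_orient[OF m3] _ m3] pc_neq_sc[OF m3 c] by auto




lemma LE_LEr: "linear_extensions V D = LEr V (D\<^sup>+)"
  unfolding linear_extensions_def LEr_def by simp

lemma LEe:
  assumes DV: "D \<subseteq> V \<times> V"
  shows "linear_extensions V D = {\<sigma> \<in> extensional V. bij_betw \<sigma> V {1..card V} \<and> (\<forall>(u,v)\<in>D. \<sigma> u < \<sigma> v)}"
proof -
  have "(\<forall>u\<in>V. \<forall>v\<in>V. (u,v) \<in> D\<^sup>+ \<longrightarrow> \<sigma> u < \<sigma> v) \<longleftrightarrow> (\<forall>(u,v)\<in>D. \<sigma> u < \<sigma> v)" for \<sigma> :: "'a \<Rightarrow> nat"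
  proof
    assume "\<forall>u\<in>V. \<forall>v\<in>V. (u,v) \<in> D\<^sup>+ \<longrightarrow> \<sigma> u < \<sigma> v"
    then show "\<forall>(u,v)\<in>D. \<sigma> u < \<sigma> v" using DV by auto
  next
    assume e: "\<forall>(u,v)\<in>D. \<sigma> u < \<sigma> v"
    have "(u,v) \<in> D\<^sup>+ \<Longrightarrow> \<sigma> u < \<sigma> v" for u v
    proof (induction rule: trancl_induct)
      case (base y) then show ?case using e by auto
    next
      case (step y z) then show ?case using e by fastforce
    qed
    then show "\<forall>u\<in>V. \<forall>v\<in>V. (u,v) \<in> D\<^sup>+ \<longrightarrow> \<sigma> u < \<sigma> v" by blast
  qed
  then show ?thesis unfolding linear_extensions_def by simp
qed

lemma RL:
  assumes fin: "finite V" and pi: "bij_betw \<pi> V V" and DV: "D \<subseteq> V \<times> V" and D2V: "D2 \<subseteq> V \<times> V"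
    and map: "\<And>u v. (u,v) \<in> D \<Longrightarrow> (\<pi> u, \<pi> v) \<in> D2"
  shows "card (linear_extensions V D2) \<le> card (linear_extensions V D)"
proof -
  define T where "T \<sigma> = restrict (\<sigma> \<circ> \<pi>) V" for \<sigma> :: "'a \<Rightarrow> nat"
  have into: "T \<sigma> \<in> linear_extensions V D" if s: "\<sigma> \<in> linear_extensions V D2" for \<sigma>
  proof -
    have s': "bij_betw \<sigma> V {1..card V}" "\<forall>(u,v)\<in>D2. \<sigma> u < \<sigma> v" using s unfolding LEe[OF D2V] by auto
    have "bij_betw (\<sigma> \<circ> \<pi>) V {1..card V}" using bij_betw_trans[OF pi s'(1)] .
    then have "bij_betw (T \<sigma>) V {1..card V}" unfolding T_def by (rule bij_betw_cong[THEN iffD1, rotated]) simp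
    moreover have "\<forall>(u,v)\<in>D. T \<sigma> u < T \<sigma> v" using s'(2) map DV unfolding T_def by fastforce
    ultimately show ?thesis unfolding LEe[OF DV] T_def by auto
  qed
  have inj: "inj_on T (linear_extensions V D2)"
  proof (rule inj_onI)
    fix s1 s2 assume s1: "s1 \<in> linear_extensions V D2" and s2: "s2 \<in> linear_extensions V D2" and eq: "T s1 = T s2"
    have "s1 w = s2 w" if w: "w \<in> V" for w
    proof -
      have "w \<in> \<pi> ` V" using pi w unfolding bij_betw_def by simp
      then obtain u where u: "u \<in> V" "\<pi> u = w" by (metis imageE)
      show ?thesis using fun_cong[OF eq, of u] u unfolding T_def by simp
    qed
    moreover have "s1 \<in> extensional V" "s2 \<in> extensional V" using s1 s2 unfolding linear_extensions_def by auto
    ultimately show "s1 = s2" by (metis extensionalityI)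
  qed
  show ?thesis
  proof (rule card_inj_on_le[OF inj])
    show "T ` linear_extensions V D2 \<subseteq> linear_extensions V D" using into by blast
    show "finite (linear_extensions V D)" unfolding LE_LEr by (rule finite_LEr[OF fin])
  qed
qed

definition rot :: "nat \<Rightarrow> nat \<Rightarrow> nat \<Rightarrow> nat" where "rot m j x = (x + j) mod m"

lemma rot_bij: assumes "j < m" shows "bij_betw (rot m j) {0..<m} {0..<m}"
proof -
  have inj: "inj_on (rot m j) {0..<m}"
    by (rule inj_onI) (use assms in \<open>auto simp: rot_def addmod split: if_splits\<close>)
  have sub: "rot m j ` {0..<m} \<subseteq> {0..<m}" using assms by (auto simp: rot_def)
  have "card (rot m j ` {0..<m}) = card {0..<m}" using card_image[OF inj] .
  then have "rot m j ` {0..<m} = {0..<m}" using sub by (intro card_subset_eq) auto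
  then show ?thesis using inj unfolding bij_betw_def by simp
qed

lemma rot_sc: "0 < m \<Longrightarrow> rot m j (sc m u) = sc m (rot m j u)"
  unfolding rot_def sc_def by (simp add: mod_add_left_eq mod_Suc_eq)

lemma rot_dA:
  assumes "u < m" "c < m" "j < m"
  shows "dA m ((c + j) mod m) (rot m j u) = dA m c u"
proof -
  have A: "rot m j u < m" "(c + j) mod m < m" using assms by (auto simp: rot_def)
  show ?thesis unfolding dA_def fmod[OF A] fmod[OF assms(1,2)]
    unfolding rot_def addmod[OF assms(1,3)] addmod[OF assms(2,3)]
    using assms by (auto; presburger)
qed

lemma rot_AB:
  assumes m3: "3 \<le> m" and c: "c < m" and j: "j < m" and uv: "(u,v) \<in> ABo m c"
  shows "(rot m j u, rot m j v) \<in> ABo m ((c + j) mod m)"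
proof -
  have m0: "0 < m" using m3 by simp
  have lt: "rot m j x < m" for x using m0 by (simp add: rot_def)
  from uv show ?thesis unfolding AB_mem
  proof (elim disjE conjE)
    assume a: "u < m" "v = sc m u" "dA m c u"
    then show "rot m j u < m \<and> rot m j v = sc m (rot m j u) \<and> dA m ((c + j) mod m) (rot m j u) \<or>
      rot m j v < m \<and> rot m j u = sc m (rot m j v) \<and> \<not> dA m ((c + j) mod m) (rot m j v)"
      using lt rot_sc[OF m0] rot_dA[OF a(1) c j] by auto
  next
    assume a: "v < m" "u = sc m v" "\<not> dA m c v"
    then show "rot m j u < m \<and> rot m j v = sc m (rot m j u) \<and> dA m ((c + j) mod m) (rot m j u) \<or>
      rot m j v < m \<and> rot m j u = sc m (rot m j v) \<and> \<not> dA m ((c + j) mod m) (rot m j v)"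
      using lt rot_sc[OF m0] rot_dA[OF a(1) c j] by auto
  qed
qed

lemma AB_sub: "3 \<le> m \<Longrightarrow> ABo m c \<subseteq> {0..<m} \<times> {0..<m}"
  using O_sub[OF AB_orient] by blast

lemma AB_num:
  assumes m3: "3 \<le> m" and c: "c < m"
  shows "num_linear_extensions {0..<m} (ABo m c) = num_linear_extensions {0..<m} (ABo m 0)"
proof (cases "c = 0")
  case True then show ?thesis by simp
next
  case False
  have m0: "0 < m" using m3 by simp
  have "card (linear_extensions {0..<m} (ABo m c)) \<le> card (linear_extensions {0..<m} (ABo m 0))"
  proof (rule RL[OF _ rot_bij[OF c] AB_sub[OF m3] AB_sub[OF m3]])
    fix u v assume "(u,v) \<in> ABo m 0"
    then have "(rot m c u, rot m c v) \<in> ABo m ((0 + c) mod m)" by (rule rot_AB[OF m3 m0 c])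
    then show "(rot m c u, rot m c v) \<in> ABo m c" using c by simp
  qed simp
  moreover have "card (linear_extensions {0..<m} (ABo m 0)) \<le> card (linear_extensions {0..<m} (ABo m c))"
  proof (rule RL[OF _ rot_bij[of "m - c"] AB_sub[OF m3] AB_sub[OF m3]])
    show "m - c < m" using False c by simp
    fix u v assume uv: "(u,v) \<in> ABo m c"
    have j: "m - c < m" using False c by simp
    have "(rot m (m - c) u, rot m (m - c) v) \<in> ABo m ((c + (m - c)) mod m)"
      by (rule rot_AB[OF m3 c j uv])
    then show "(rot m (m - c) u, rot m (m - c) v) \<in> ABo m 0" using c by simp
  qed simp
  ultimately show ?thesis unfolding num_linear_extensions_def by simp
qed




lemma acyc_facts:
  assumes D: "is_orientation (cycle_edges m) D" and ac: "acyclic D" and m3: "3 \<le> m"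
  shows "D\<^sup>+ \<subseteq> {0..<m} \<times> {0..<m}" "wf (D\<^sup>+)" "trans (D\<^sup>+)" "\<And>x. (x,x) \<notin> D\<^sup>+"
proof -
  have sub: "D \<subseteq> {0..<m} \<times> {0..<m}" by (rule O_sub[OF D m3])
  then show "D\<^sup>+ \<subseteq> {0..<m} \<times> {0..<m}" by (rule trancl_subset_Sigma)
  have "finite D" using sub by (rule finite_subset) auto
  then have "wf D" using ac by (rule finite_acyclic_wf)
  then show "wf (D\<^sup>+)" by (rule wf_trancl)
  show "trans (D\<^sup>+)" by (rule trans_trancl)
  show "\<And>x. (x,x) \<notin> D\<^sup>+" using ac unfolding acyclic_def by blast
qed

lemma num_LEr: "num_linear_extensions V D = card (LEr V (D\<^sup>+))"
  unfolding num_linear_extensions_def LE_LEr ..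

lemma CMP_le:
  assumes D: "is_orientation (cycle_edges m) D" and ac: "acyclic D" and m3: "3 \<le> m" and odd: "odd m"
    and c: "c \<in> mids D"
  shows "num_linear_extensions {0..<m} D \<le> num_linear_extensions {0..<m} (ABo m c)"
proof -
  have cm: "c < m" using c O1[OF D _ m3] unfolding mids_def by blast
  note f = acyc_facts[OF D ac m3]
  note g = acyc_facts[OF AB_orient[OF m3] AB_acyclic[OF m3 odd cm] m3]
  show ?thesis unfolding num_LEr
  proof (rule B1[OF _ _ f(1) g(1) f(2) g(3) g(4)])
    fix x y assume "(x,y) \<in> (ABo m c)\<^sup>+"
    then have "(x,y) \<in> ABo m c \<or> (x,y) = (pc m c, sc m c)" unfolding AB_trancl[OF m3 odd cm] by auto
    then show "(x,y) \<in> D\<^sup>+ \<or> (y,x) \<in> D\<^sup>+"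
    proof
      assume "(x,y) \<in> ABo m c"
      then show ?thesis unfolding AB_mem using CP1[OF D] by blast
    next
      assume "(x,y) = (pc m c, sc m c)"
      then show ?thesis using CP2[OF D m3 c] by auto
    qed
  qed (use m3 in auto)
qed

lemma CMP_ge:
  assumes D: "is_orientation (cycle_edges m) D" and ac: "acyclic D" and m3: "3 \<le> m" and odd: "odd m"
    and P: "directed_2paths D = {(x0,c,z0)}"
  shows "num_linear_extensions {0..<m} (ABo m c) \<le> num_linear_extensions {0..<m} D"
proof -
  have "(x0,c,z0) \<in> directed_2paths D" using P by simp
  then have xz: "(x0,c) \<in> D" "(c,z0) \<in> D" unfolding directed_2paths_def by auto
  have cm: "c < m" using xz O1[OF D _ m3] by blast
  have tp: "(x0 = pc m c \<and> z0 = sc m c) \<or> (x0 = sc m c \<and> z0 = pc m c)" by (rule twopath[OF D m3 xz])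
  have x0z0: "x0 \<noteq> z0" using tp pc_neq_sc[OF m3 cm] by auto
  have Dtr: "D\<^sup>+ = D \<union> {(x0,z0)}" by (rule TR[OF P _ x0z0]) (use O_irr[OF D _ m3] in auto)
  note f = acyc_facts[OF D ac m3]
  note g = acyc_facts[OF AB_orient[OF m3] AB_acyclic[OF m3 odd cm] m3]
  show ?thesis unfolding num_LEr
  proof (rule B1[OF _ _ g(1) f(1) g(2) f(3) f(4)])
    fix x y assume "(x,y) \<in> D\<^sup>+"
    then have "(x,y) \<in> D \<or> (x,y) = (x0,z0)" unfolding Dtr by auto
    then show "(x,y) \<in> (ABo m c)\<^sup>+ \<or> (y,x) \<in> (ABo m c)\<^sup>+"
    proof
      assume "(x,y) \<in> D"
      then have "x < m \<and> y < m \<and> (y = sc m x \<or> x = sc m y)" by (rule O1[OF D _ m3])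
      then show ?thesis using CP1[OF AB_orient[OF m3]] by blast
    next
      assume "(x,y) = (x0,z0)"
      moreover have "(pc m c, sc m c) \<in> (ABo m c)\<^sup>+" unfolding AB_trancl[OF m3 odd cm] by simp
      ultimately show ?thesis using tp by auto
    qed
  qed (use m3 in auto)
qed




lemma TL:
  assumes m5: "5 \<le> m" and c: "c < m" and c': "c' < m" and ne: "c \<noteq> c'"
  shows "\<exists>w \<in> {pc m c, c, sc m c}. w \<notin> {pc m c', c', sc m c'}"
proof (rule ccontr)
  assume "\<not> ?thesis"
  then have h: "pc m c \<in> {pc m c', c', sc m c'}" "c \<in> {pc m c', c', sc m c'}" "sc m c \<in> {pc m c', c', sc m c'}" by auto
  show False using h m5 c c' ne unfolding pc_if[OF c] sc_if[OF c] pc_if[OF c'] sc_if[OF c']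
    by (auto split: if_splits)
qed

lemma comp_AB:
  assumes D: "is_orientation (cycle_edges m) D" and m3: "3 \<le> m" and odd: "odd m"
    and c: "c \<in> mids D" and cm: "c < m" and xy: "(x,y) \<in> (ABo m c)\<^sup>+"
  shows "(x,y) \<in> D\<^sup>+ \<or> (y,x) \<in> D\<^sup>+"
proof -
  have "(x,y) \<in> ABo m c \<or> (x,y) = (pc m c, sc m c)" using xy unfolding AB_trancl[OF m3 odd cm] by auto
  then show ?thesis
  proof
    assume "(x,y) \<in> ABo m c"
    then show ?thesis unfolding AB_mem using CP1[OF D] by blast
  next
    assume "(x,y) = (pc m c, sc m c)"
    then show ?thesis using CP2[OF D m3 c] by auto
  qed
qed

lemma card3: "card {a, b, d} \<le> 3"
  by (auto simp: card_insert_if)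

lemma tri:
  assumes Q: "\<And>a b d. (a,b) \<in> R \<Longrightarrow> (b,d) \<in> R \<Longrightarrow> a \<in> T \<and> b \<in> T \<and> d \<in> T"
    and xy: "(x,y) \<in> R \<or> (y,x) \<in> R" and yw: "(y,w) \<in> R \<or> (w,y) \<in> R" and xw: "(x,w) \<in> R \<or> (w,x) \<in> R"
  shows "w \<in> T"
proof (cases "(x,y) \<in> R")
  case xy1: True
  show ?thesis
  proof (cases "(y,w) \<in> R")
    case True then show ?thesis using Q[OF xy1 True] by simp
  next
    case False
    then have wy: "(w,y) \<in> R" using yw by simp
    show ?thesis
    proof (cases "(x,w) \<in> R")
      case True then show ?thesis using Q[OF True wy] by simp
    next
      case False then have "(w,x) \<in> R" using xw by simp
      then show ?thesis using Q[OF _ xy1] by simp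
    qed
  qed
next
  case False
  then have yx: "(y,x) \<in> R" using xy by simp
  show ?thesis
  proof (cases "(w,y) \<in> R")
    case True then show ?thesis using Q[OF True yx] by simp
  next
    case False
    then have yw1: "(y,w) \<in> R" using yw by simp
    show ?thesis
    proof (cases "(x,w) \<in> R")
      case True then show ?thesis using Q[OF yx True] by simp
    next
      case False then have "(w,x) \<in> R" using xw by simp
      then show ?thesis using Q[OF yw1] by simp
    qed
  qed
qed

lemma card_ge2:
  assumes "finite C" "2 \<le> card C"
  obtains x y where "x \<in> C" "y \<in> C" "x \<noteq> y"
proof -
  have "C \<noteq> {}" using assms by auto
  then obtain x where x: "x \<in> C" by auto
  have "card (C - {x}) \<ge> 1" using assms x by simp
  then have "C - {x} \<noteq> {}" by (metis card.empty not_one_le_zero)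
  then obtain y where "y \<in> C - {x}" by auto
  then show ?thesis using that x by auto
qed

lemma CMP_lt:
  assumes D: "is_orientation (cycle_edges m) D" and ac: "acyclic D" and m5: "5 \<le> m" and odd: "odd m"
    and c: "c \<in> mids D" and c': "c' \<in> mids D" and ne: "c \<noteq> c'"
  shows "num_linear_extensions {0..<m} D < num_linear_extensions {0..<m} (ABo m c)"
proof -
  have m3: "3 \<le> m" using m5 by simp
  have cm: "c < m" using c O1[OF D _ m3] unfolding mids_def by blast
  have cm': "c' < m" using c' O1[OF D _ m3] unfolding mids_def by blast
  let ?V = "{0..<m}"
  let ?R = "D\<^sup>+"
  let ?R' = "(ABo m c)\<^sup>+"
  let ?L = "{pc m c', c', sc m c'}"
  let ?T = "{pc m c, c, sc m c}"
  note f = acyc_facts[OF D ac m3]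
  note g = acyc_facts[OF AB_orient[OF m3] AB_acyclic[OF m3 odd cm] m3]
  have LV: "?L \<subseteq> ?V" using cm' pc_lt[of m] sc_lt[of m] m3 by auto
  have TV: "?T \<subseteq> ?V" using cm pc_lt[of m] sc_lt[of m] m3 by auto
  have cardL: "card ?L = 3" using pc_neq_sc[OF m3 cm'] pc_neq[OF m3 cm'] sc_neq[OF m3 cm'] by auto
  obtain w where w: "w \<in> ?T" "w \<notin> ?L" using TL[OF m5 cm cm' ne] by blast
  have chL: "rchain ?R ?L"
  proof -
    have md: "((pc m c', c') \<in> D \<and> (c', sc m c') \<in> D) \<or> ((sc m c', c') \<in> D \<and> (c', pc m c') \<in> D)"
      by (rule mid_dir[OF D m3 c'])
    then show ?thesis
    proof
      assume a: "(pc m c', c') \<in> D \<and> (c', sc m c') \<in> D"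
      then have b: "(pc m c', c') \<in> ?R" "(c', sc m c') \<in> ?R" "(pc m c', sc m c') \<in> ?R"
        by (auto intro: trancl_into_trancl)
      show ?thesis unfolding rchain_def using b by blast
    next
      assume a: "(sc m c', c') \<in> D \<and> (c', pc m c') \<in> D"
      then have b: "(sc m c', c') \<in> ?R" "(c', pc m c') \<in> ?R" "(sc m c', pc m c') \<in> ?R"
        by (auto intro: trancl_into_trancl)
      show ?thesis unfolding rchain_def using b by blast
    qed
  qed
  have Rtr: "?R' = ABo m c \<union> {(pc m c, sc m c)}" by (rule AB_trancl[OF m3 odd cm])
  have P2: "directed_2paths (ABo m c) = {(pc m c, c, sc m c)}" by (rule AB_2paths[OF m3 odd cm])
  have G: "a \<in> ?T \<and> b \<in> ?T \<and> d \<in> ?T" if "(a,b) \<in> ?R'" "(b,d) \<in> ?R'" for a b d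
  proof -
    have "a = pc m c \<and> b = c \<and> d = sc m c"
      by (rule G2P[OF P2 _ pc_neq_sc[OF m3 cm]]) (use that Rtr O_irr[OF AB_orient[OF m3] _ m3] in auto)
    then show ?thesis by simp
  qed
  have big: "\<exists>X. X \<subseteq> GC ?V ?R' (12 * t) \<and> X \<inter> GC ?V ?R (12 * t) = {} \<and> t ^ card ?V \<le> card X" for t
  proof -
    define B where "B v = (if v \<in> ?L then {4*t+1..5*t} else {1..t})" for v
    define X where "X = PiE ?V B"
    have cardX: "card X = t ^ card ?V"
    proof -
      have "card (B v) = t" for v unfolding B_def by auto
      then show ?thesis unfolding X_def by (simp add: card_PiE)
    qed
    have inB: "g v \<in> B v" if "g \<in> X" "v \<in> ?V" for g v
      using that unfolding X_def by (simp add: PiE_mem)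
    have le5: "g v \<le> 5 * t" if "g \<in> X" "v \<in> ?V" for g v
      using inB[OF that] unfolding B_def by (auto split: if_splits)
    have le1: "g v \<le> t" if "g \<in> X" "v \<in> ?V" "v \<notin> ?L" for g v
      using inB[OF that(1,2)] that(3) unfolding B_def by (auto split: if_splits)
    have ge4: "g v \<ge> 4 * t + 1" if "g \<in> X" "v \<in> ?L" for g v
    proof -
      have vV: "v \<in> ?V" using that(2) LV by blast
      have "g v \<in> B v" by (rule inB[OF that(1) vV])
      then show ?thesis using that(2) unfolding B_def by auto
    qed
    have XG: "X \<subseteq> GC ?V ?R' (12 * t)"
    proof
      fix g assume gX: "g \<in> X"
      have "X \<subseteq> ?V \<rightarrow>\<^sub>E {1..12*t}" unfolding X_def
        by (rule PiE_mono) (auto simp: B_def)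
      then have "g \<in> ?V \<rightarrow>\<^sub>E {1..12*t}" using gX by blast
      moreover have "sum g C \<le> 12 * t" if C: "C \<subseteq> ?V" "rchain ?R' C" for C
      proof (cases "C \<subseteq> ?T")
        case True
        have s1: "sum g C \<le> sum g ?T" using True by (intro sum_mono2) auto
        have s2: "sum g ?T = g w + sum g (?T - {w})" using w(1) by (simp add: sum.remove)
        have s3: "sum g (?T - {w}) \<le> card (?T - {w}) * (5 * t)"
          using sum_bounded_above[of "?T - {w}" g "5 * t"] le5[OF gX] TV by auto
        have s4: "card (?T - {w}) \<le> 2"
        proof -
          have "card ?T \<le> 3" by (rule card3)
          then show ?thesis using w(1) by simp
        qed
        have s45: "card (?T - {w}) * (5 * t) \<le> 2 * (5 * t)" using s4 by (rule mult_right_mono) simp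
        have wV: "w \<in> ?V" using w(1) TV by blast
        have s5: "g w \<le> t" by (rule le1[OF gX wV w(2)])
        show ?thesis using s1 s2 s3 s45 s5 by linarith
      next
        case False
        then obtain w' where w': "w' \<in> C" "w' \<notin> ?T" by auto
        have finC: "finite C" using C(1) finite_subset by blast
        have "card C \<le> 2"
        proof (rule ccontr)
          assume "\<not> card C \<le> 2"
          then have "2 \<le> card (C - {w'})" using w'(1) finC by simp
          then obtain x y where xy: "x \<in> C - {w'}" "y \<in> C - {w'}" "x \<noteq> y"
            using card_ge2[of "C - {w'}"] finC by blast
          have rc: "(a,b) \<in> ?R' \<or> (b,a) \<in> ?R'" if "a \<in> C" "b \<in> C" "a \<noteq> b" for a b
            using C(2) that unfolding rchain_def by blast
          have xC: "x \<in> C" "y \<in> C" "x \<noteq> w'" "y \<noteq> w'" using xy by auto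
          have "w' \<in> ?T"
            by (rule tri[OF G rc[OF xC(1,2) xy(3)] rc[OF xC(2) w'(1) xC(4)] rc[OF xC(1) w'(1) xC(3)]])
          then show False using w'(2) by simp
        qed
        have b5: "\<And>i. i \<in> C \<Longrightarrow> g i \<le> 5 * t" using le5[OF gX] C(1) by blast
        have "sum g C \<le> card C * (5 * t)"
          using sum_bounded_above[of C g "5 * t", OF b5] by simp
        also have "\<dots> \<le> 2 * (5 * t)" using \<open>card C \<le> 2\<close> by (rule mult_right_mono) simp
        finally show ?thesis by simp
      qed
      ultimately show "g \<in> GC ?V ?R' (12 * t)" unfolding GC_def by auto
    qed
    have XG': "X \<inter> GC ?V ?R (12 * t) = {}"
    proof (rule ccontr)
      assume "X \<inter> GC ?V ?R (12 * t) \<noteq> {}"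
      then obtain g where g: "g \<in> X" "g \<in> GC ?V ?R (12 * t)" by auto
      have "\<forall>C. C \<subseteq> ?V \<longrightarrow> rchain ?R C \<longrightarrow> sum g C \<le> 12 * t" using g(2) unfolding GC_def by blast
      then have "sum g ?L \<le> 12 * t" using LV chL by blast
      moreover have "sum g ?L \<ge> 3 * (4 * t + 1)"
      proof -
        have "card ?L * (4 * t + 1) \<le> sum g ?L" using sum_bounded_below[of ?L "4 * t + 1" g] ge4[OF g(1)] by auto
        then show ?thesis using cardL by simp
      qed
      ultimately show False by simp
    qed
    show ?thesis using XG XG' cardX by (intro exI[of _ X]) simp
  qed
  show ?thesis unfolding num_LEr
  proof (rule B2[OF _ _ f(1) g(1) f(2) g(3) g(4) _ big])
    show "\<And>x y. (x,y) \<in> ?R' \<Longrightarrow> (x,y) \<in> ?R \<or> (y,x) \<in> ?R"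
      using comp_AB[OF D m3 odd c cm] by blast
  qed (use m3 in auto)
qed




theorem theorem2p8:
  fixes n :: nat and D :: "(nat \<times> nat) set"
  assumes "n \<ge> 1"
    and "acyclic_orientation (cycle_edges (2*n+1)) D"
  shows "(\<forall>D'. acyclic_orientation (cycle_edges (2*n+1)) D' \<longrightarrow>
            num_linear_extensions (cycle_vertices (2*n+1)) D'
              \<le> num_linear_extensions (cycle_vertices (2*n+1)) D)
         \<longleftrightarrow> almost_bipartite (cycle_edges (2*n+1)) D"
proof -
  define m where "m = 2*n+1"
  have m3: "3 \<le> m" using assms(1) unfolding m_def by simp
  have odd: "odd m" unfolding m_def by simp
  have V: "cycle_vertices m = {0..<m}" unfolding cycle_vertices_def by simp
  have Dor: "is_orientation (cycle_edges m) D" and ac: "acyclic D"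
    using assms(2) unfolding acyclic_orientation_def m_def by auto
  have card2: "card (directed_2paths D) = card (mids D)" by (rule card_2paths[OF Dor m3])
  have midm: "\<And>D y. is_orientation (cycle_edges m) D \<Longrightarrow> y \<in> mids D \<Longrightarrow> y < m"
    using O1[OF _ _ m3] unfolding mids_def by blast
  have "(\<forall>D'. acyclic_orientation (cycle_edges m) D' \<longrightarrow>
            num_linear_extensions {0..<m} D' \<le> num_linear_extensions {0..<m} D)
         \<longleftrightarrow> almost_bipartite (cycle_edges m) D"
  proof
    assume H: "\<forall>D'. acyclic_orientation (cycle_edges m) D' \<longrightarrow>
            num_linear_extensions {0..<m} D' \<le> num_linear_extensions {0..<m} D"
    show "almost_bipartite (cycle_edges m) D"
    proof (rule ccontr)
      assume nab: "\<not> almost_bipartite (cycle_edges m) D"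
      then have c1: "card (mids D) \<noteq> 1"
        using assms(2) card2 unfolding almost_bipartite_def m_def by auto
      obtain c where c: "c \<in> mids D" using AC1[OF Dor m3 odd] by blast
      obtain c' where c': "c' \<in> mids D" "c' \<noteq> c"
      proof (cases "\<exists>c'\<in>mids D. c' \<noteq> c")
        case True then show ?thesis using that by blast
      next
        case False
        then have "mids D = {c}" using c by blast
        then show ?thesis using c1 by simp
      qed
      show False
      proof (cases "m = 3")
        case True
        then show False using AC2[of D c c'] Dor ac c c' by simp
      next
        case False
        then have m5: "5 \<le> m" using m3 odd by presburger
        have cm: "c < m" using midm[OF Dor c] .
        have lt: "num_linear_extensions {0..<m} D < num_linear_extensions {0..<m} (ABo m c)"
          by (rule CMP_lt[OF Dor ac m5 odd c c'(1) c'(2)[symmetric]])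
        have "acyclic_orientation (cycle_edges m) (ABo m c)"
          unfolding acyclic_orientation_def using AB_orient[OF m3] AB_acyclic[OF m3 odd cm] by simp
        then have "num_linear_extensions {0..<m} (ABo m c) \<le> num_linear_extensions {0..<m} D"
          using H by blast
        then show False using lt by simp
      qed
    qed
  next
    assume AB: "almost_bipartite (cycle_edges m) D"
    then have "card (directed_2paths D) = 1" unfolding almost_bipartite_def by simp
    then obtain p where p: "directed_2paths D = {p}" by (rule card_1_singletonE)
    obtain x0 c z0 where pe: "p = (x0, c, z0)" by (cases p) auto
    have "(x0,c,z0) \<in> directed_2paths D" using p pe by simp
    then have "c \<in> mids D" unfolding directed_2paths_def mids_def by blast
    then have cm: "c < m" by (rule midm[OF Dor])
    show "\<forall>D'. acyclic_orientation (cycle_edges m) D' \<longrightarrow>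
            num_linear_extensions {0..<m} D' \<le> num_linear_extensions {0..<m} D"
    proof (intro allI impI)
      fix D' assume a': "acyclic_orientation (cycle_edges m) D'"
      have D'or: "is_orientation (cycle_edges m) D'" and ac': "acyclic D'"
        using a' unfolding acyclic_orientation_def by auto
      obtain c' where c': "c' \<in> mids D'" using AC1[OF D'or m3 odd] by blast
      have cm': "c' < m" by (rule midm[OF D'or c'])
      have "num_linear_extensions {0..<m} D' \<le> num_linear_extensions {0..<m} (ABo m c')"
        by (rule CMP_le[OF D'or ac' m3 odd c'])
      also have "\<dots> = num_linear_extensions {0..<m} (ABo m 0)" by (rule AB_num[OF m3 cm'])
      also have "\<dots> = num_linear_extensions {0..<m} (ABo m c)" by (rule AB_num[OF m3 cm, symmetric])
      also have "\<dots> \<le> num_linear_extensions {0..<m} D"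
        by (rule CMP_ge[OF Dor ac m3 odd]) (use p pe in simp)
      finally show "num_linear_extensions {0..<m} D' \<le> num_linear_extensions {0..<m} D" .
    qed
  qed
  then show ?thesis unfolding m_def[symmetric] V[symmetric] .
qed


end
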